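(* Let $n\ge1$ and $T\in I^\ell(n)$. Then: - the socle of $T$ is isomorphic to $S_1$; - the cosocle (top) of $T$ is isomorphic to $S_0$; - let $W\subseteq T$ be the socle; the module $\ker\big(T/W\to S_0\big)$ (kernel of the map induced by the projection to the cosocle) is isomorphic to a point of $I^r(n-1)$.
   Context: **The preprojective algebra.** $\Pi$ is the completed preprojective algebra of the quiver with vertices $0,1$ and arrows $\alpha,\beta:0\to1$, $\alpha^*,\beta^*:1\to0$. It is the path algebra, completed with respect to the ideal generated by the arrows, modulo the relations $\alpha\alpha^*+\beta\beta^*=0$ and $\alpha^*\alpha+\beta^*\beta=0$. A finite-dimensional $\Pi$-module is a graded space $V=V_0\oplus V_1$ with linear maps $t_\alpha,t_\beta:V_0\to V_1$ and $t_{\alpha^*},t_{\beta^*}:V_1\to V_0$ such that: - $t_\alpha t_{\alpha^*}+t_\beta t_{\beta^*}=0$ and $t_{\alpha^*}t_\alpha+t_{\beta^*}t_\beta=0$; - all sufficiently long composites of these maps along paths vanish. Its dimension vector is $(\dim V_0)\alpha_0+(\dim V_1)\alpha_1$, and we put $\delta=\alpha_0+\alpha_1$. $S_0,S_1$ are the simple modules of dimension vectors $\alpha_0,\alpha_1$. $\Pi(\mu)$ is the variety of module structures on a fixed graded space of dimension vector $\mu$. **The varieties $I^\ell(n)$ and $I^r(n)$.** - $I^\ell(n)$ is the set of $T\in\Pi(n\delta)$ with $t_\alpha$ invertible and $t_{\beta^*}t_\alpha$ nilpotent of order exactly $n$, i.e. $(t_{\beta^*}t_\alpha)^n=0\ne(t_{\beta^*}t_\alpha)^{n-1}$.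 - $I^r(n)$ is the set of $T\in\Pi(n\delta)$ with $t_{\beta^*}$ invertible and $t_\alpha t_{\beta^*}$ nilpotent of order exactly $n$. - $I^r(0)$ consists of the zero module. *)

theory Defs
  imports "Jordan_Normal_Form.Matrix"
begin

text \<open>Finite-dimensional modules over the completed preprojective algebra of the
quiver with vertices 0,1, arrows alpha, beta : 0 -> 1 and alphas, betas : 1 -> 0,
over the complex numbers.\<close>

record rep =
  dim0 :: nat
  dim1 :: nat
  ta  :: "complex mat"
  tb  :: "complex mat"
  tas :: "complex mat"
  tbs :: "complex mat"

text \<open>Composite of arrows along a path starting at vertex i (False = 0, True = 1);
the list entry True selects alpha resp. alpha*, False selects beta resp. beta*.
The first list element is the first arrow applied.\<close>
fun pathmat :: "rep \<Rightarrow> bool \<Rightarrow> bool list \<Rightarrow> complex mat" where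
  "pathmat T False [] = 1\<^sub>m (dim0 T)"
| "pathmat T True [] = 1\<^sub>m (dim1 T)"
| "pathmat T False (c # cs) = pathmat T True cs * (if c then ta T else tb T)"
| "pathmat T True (c # cs) = pathmat T False cs * (if c then tas T else tbs T)"

definition dimv :: "rep \<Rightarrow> bool \<Rightarrow> nat" where
  "dimv T i = (if i then dim1 T else dim0 T)"

definition is_module :: "rep \<Rightarrow> bool" where
  "is_module T \<longleftrightarrow>
     ta T \<in> carrier_mat (dim1 T) (dim0 T) \<and> tb T \<in> carrier_mat (dim1 T) (dim0 T) \<and>
     tas T \<in> carrier_mat (dim0 T) (dim1 T) \<and> tbs T \<in> carrier_mat (dim0 T) (dim1 T) \<and>
     ta T * tas T + tb T * tbs T = 0\<^sub>m (dim1 T) (dim1 T) \<and>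
     tas T * ta T + tbs T * tb T = 0\<^sub>m (dim0 T) (dim0 T) \<and>
     (\<exists>N. \<forall>i cs. length cs \<ge> N \<longrightarrow>
        pathmat T i cs = 0\<^sub>m (dimv T (if even (length cs) then i else \<not> i)) (dimv T i))"

definition nilp_order :: "complex mat \<Rightarrow> nat \<Rightarrow> nat \<Rightarrow> bool" where
  "nilp_order M d m \<longleftrightarrow> M ^\<^sub>m m = 0\<^sub>m d d \<and> M ^\<^sub>m (m - 1) \<noteq> 0\<^sub>m d d"

definition I_l :: "nat \<Rightarrow> rep set" where
  "I_l n = {T. is_module T \<and> dim0 T = n \<and> dim1 T = n \<and> invertible_mat (ta T) \<and>
                nilp_order (tbs T * ta T) n n}"

definition I_r :: "nat \<Rightarrow> rep set" where
  "I_r n = (if n = 0 then {T. is_module T \<and> dim0 T = 0 \<and> dim1 T = 0}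
            else {T. is_module T \<and> dim0 T = n \<and> dim1 T = n \<and> invertible_mat (tbs T) \<and>
                nilp_order (ta T * tbs T) n n})"

definition S0 :: rep where
  "S0 = \<lparr>dim0 = 1, dim1 = 0, ta = 0\<^sub>m 0 1, tb = 0\<^sub>m 0 1, tas = 0\<^sub>m 1 0, tbs = 0\<^sub>m 1 0\<rparr>"
definition S1 :: rep where
  "S1 = \<lparr>dim0 = 0, dim1 = 1, ta = 0\<^sub>m 1 0, tb = 0\<^sub>m 1 0, tas = 0\<^sub>m 0 1, tbs = 0\<^sub>m 0 1\<rparr>"

definition subspace_of :: "nat \<Rightarrow> complex vec set \<Rightarrow> bool" where
  "subspace_of d U \<longleftrightarrow> U \<subseteq> carrier_vec d \<and> 0\<^sub>v d \<in> U \<and>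
     (\<forall>u\<in>U. \<forall>v\<in>U. u + v \<in> U) \<and> (\<forall>c. \<forall>u\<in>U. c \<cdot>\<^sub>v u \<in> U)"

text \<open>Submodules of T, given as graded subspaces (U0, U1).\<close>
definition submod :: "rep \<Rightarrow> complex vec set \<Rightarrow> complex vec set \<Rightarrow> bool" where
  "submod T U0 U1 \<longleftrightarrow> subspace_of (dim0 T) U0 \<and> subspace_of (dim1 T) U1 \<and>
     (\<forall>v\<in>U0. ta T *\<^sub>v v \<in> U1 \<and> tb T *\<^sub>v v \<in> U1) \<and>
     (\<forall>w\<in>U1. tas T *\<^sub>v w \<in> U0 \<and> tbs T *\<^sub>v w \<in> U0)"

definition simple_submod :: "rep \<Rightarrow> complex vec set \<Rightarrow> complex vec set \<Rightarrow> bool" where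
  "simple_submod T U0 U1 \<longleftrightarrow> submod T U0 U1 \<and> (U0 \<noteq> {0\<^sub>v (dim0 T)} \<or> U1 \<noteq> {0\<^sub>v (dim1 T)}) \<and>
     (\<forall>X0 X1. submod T X0 X1 \<and> X0 \<subseteq> U0 \<and> X1 \<subseteq> U1 \<longrightarrow>
        (X0 = {0\<^sub>v (dim0 T)} \<and> X1 = {0\<^sub>v (dim1 T)}) \<or> (X0 = U0 \<and> X1 = U1))"

definition maximal_submod :: "rep \<Rightarrow> complex vec set \<Rightarrow> complex vec set \<Rightarrow> bool" where
  "maximal_submod T U0 U1 \<longleftrightarrow> submod T U0 U1 \<and>
     (U0 \<noteq> carrier_vec (dim0 T) \<or> U1 \<noteq> carrier_vec (dim1 T)) \<and>
     (\<forall>X0 X1. submod T X0 X1 \<and> U0 \<subseteq> X0 \<and> U1 \<subseteq> X1 \<longrightarrow>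
        (X0 = U0 \<and> X1 = U1) \<or> (X0 = carrier_vec (dim0 T) \<and> X1 = carrier_vec (dim1 T)))"

text \<open>Socle: the sum (= generated subspace) of all simple submodules, componentwise.\<close>
definition soc0 :: "rep \<Rightarrow> complex vec set" where
  "soc0 T = \<Inter>{S. subspace_of (dim0 T) S \<and> (\<forall>U0 U1. simple_submod T U0 U1 \<longrightarrow> U0 \<subseteq> S)}"
definition soc1 :: "rep \<Rightarrow> complex vec set" where
  "soc1 T = \<Inter>{S. subspace_of (dim1 T) S \<and> (\<forall>U0 U1. simple_submod T U0 U1 \<longrightarrow> U1 \<subseteq> S)}"

text \<open>Radical: intersection of all maximal submodules; the cosocle (top) is T / rad T.\<close>
definition rad0 :: "rep \<Rightarrow> complex vec set" where
  "rad0 T = carrier_vec (dim0 T) \<inter> \<Inter>{U0. \<exists>U1. maximal_submod T U0 U1}"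
definition rad1 :: "rep \<Rightarrow> complex vec set" where
  "rad1 T = carrier_vec (dim1 T) \<inter> \<Inter>{U1. \<exists>U0. maximal_submod T U0 U1}"

text \<open>The subquotient K / W of T (W \<subseteq> K submodules) is isomorphic to the module T':
there are linear surjections f_i : K_i -> C^(dim_i T') with kernel W_i, compatible with
all four arrows (these induce a module isomorphism K/W \<cong> T').\<close>
definition lin_on :: "complex vec set \<Rightarrow> (complex vec \<Rightarrow> complex vec) \<Rightarrow> bool" where
  "lin_on K f \<longleftrightarrow> (\<forall>u\<in>K. \<forall>v\<in>K. f (u + v) = f u + f v) \<and> (\<forall>c. \<forall>u\<in>K. f (c \<cdot>\<^sub>v u) = c \<cdot>\<^sub>v f u)"

definition subquot_iso ::
  "rep \<Rightarrow> complex vec set \<Rightarrow> complex vec set \<Rightarrow> complex vec set \<Rightarrow> complex vec set \<Rightarrow> rep \<Rightarrow> bool" where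
  "subquot_iso T K0 K1 W0 W1 T' \<longleftrightarrow>
     submod T K0 K1 \<and> submod T W0 W1 \<and> W0 \<subseteq> K0 \<and> W1 \<subseteq> K1 \<and>
     (\<exists>f0 f1. lin_on K0 f0 \<and> lin_on K1 f1 \<and>
        f0 ` K0 = carrier_vec (dim0 T') \<and> f1 ` K1 = carrier_vec (dim1 T') \<and>
        (\<forall>v\<in>K0. f0 v = 0\<^sub>v (dim0 T') \<longleftrightarrow> v \<in> W0) \<and>
        (\<forall>v\<in>K1. f1 v = 0\<^sub>v (dim1 T') \<longleftrightarrow> v \<in> W1) \<and>
        (\<forall>v\<in>K0. f1 (ta T *\<^sub>v v) = ta T' *\<^sub>v f0 v \<and> f1 (tb T *\<^sub>v v) = tb T' *\<^sub>v f0 v) \<and>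
        (\<forall>w\<in>K1. f0 (tas T *\<^sub>v w) = tas T' *\<^sub>v f1 w \<and> f0 (tbs T *\<^sub>v w) = tbs T' *\<^sub>v f1 w))"

end

theory Submission
  imports Defs "Jordan_Normal_Form.Determinant"
begin

lemma mat_mult_unit:
  fixes A :: "complex mat"
  assumes "A \<in> carrier_mat nr nc" "j < nc"
  shows "A *\<^sub>v unit_vec nc j = col A j"
  using assms by (intro eq_vecI) auto

lemma mat_eq_vec:
  fixes A B :: "complex mat"
  assumes A: "A \<in> carrier_mat nr nc" and B: "B \<in> carrier_mat nr nc"
    and h: "\<And>v. v \<in> carrier_vec nc \<Longrightarrow> A *\<^sub>v v = B *\<^sub>v v"
  shows "A = B"
proof (rule mat_col_eqI)
  fix j assume "j < dim_col B"
  then have j: "j < nc" using B by auto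
  show "col A j = col B j"
    using h[of "unit_vec nc j"] mat_mult_unit[OF A j] mat_mult_unit[OF B j] by simp
qed (use A B in auto)

lemma mat_zero_vec[simp]: "A \<in> carrier_mat nr nc \<Longrightarrow> A *\<^sub>v 0\<^sub>v nc = 0\<^sub>v nr"
  by (intro eq_vecI) auto

lemma zero_mat_vec[simp]: "v \<in> carrier_vec nc \<Longrightarrow> 0\<^sub>m nr nc *\<^sub>v v = 0\<^sub>v nr"
  by (intro eq_vecI) auto

lemma mat_smult_vec: "A \<in> carrier_mat nr nc \<Longrightarrow> v \<in> carrier_vec nc \<Longrightarrow> A *\<^sub>v (c \<cdot>\<^sub>v v) = c \<cdot>\<^sub>v (A *\<^sub>v v)"
  for A :: "complex mat" using mult_mat_vec by blast

lemma mat_uminus_vec: "A \<in> carrier_mat nr nc \<Longrightarrow> v \<in> carrier_vec nc \<Longrightarrow> A *\<^sub>v (- v) = - (A *\<^sub>v v)"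
  for A :: "complex mat"
  by (intro eq_vecI) (auto simp: scalar_prod_def sum_negf)

lemma pow_funpow:
  assumes M: "M \<in> carrier_mat m m"
  shows "v \<in> carrier_vec m \<Longrightarrow> (M ^\<^sub>m k) *\<^sub>v v = ((\<lambda>x. M *\<^sub>v x) ^^ k) v"
proof (induction k arbitrary: v)
  case 0 then show ?case using M by simp
next
  case (Suc k)
  have "(M ^\<^sub>m Suc k) *\<^sub>v v = (M ^\<^sub>m k) *\<^sub>v (M *\<^sub>v v)"
    using M Suc.prems assoc_mult_mat_vec[of "M ^\<^sub>m k" m m M m v] by simp
  also have "\<dots> = ((\<lambda>x. M *\<^sub>v x) ^^ k) (M *\<^sub>v v)" using Suc.IH Suc.prems M by simp
  finally show ?case by (simp add: funpow_Suc_right del: funpow.simps)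
qed

lemma funpow_carrier:
  assumes M: "M \<in> carrier_mat m m"
  shows "v \<in> carrier_vec m \<Longrightarrow> ((\<lambda>x. M *\<^sub>v x) ^^ k) v \<in> carrier_vec m"
  using M by (induction k) auto

lemma sel_mat_vec:
  assumes "i < nr" "z \<in> carrier_vec nc"
  shows "(mat nr nc (\<lambda>(i,j). if j = h i \<and> c i then 1 else 0) *\<^sub>v z) $ i
     = (if c i \<and> h i < nc then z $ h i else (0::complex))"
proof -
  have "(mat nr nc (\<lambda>(i,j). if j = h i \<and> c i then 1 else 0) *\<^sub>v z) $ i
     = (\<Sum>j\<in>{0..<nc}. (if j = h i \<and> c i then 1 else 0) * z $ j)"
    using assms by (simp add: scalar_prod_def row_def)
  also have "\<dots> = (\<Sum>j\<in>{0..<nc}. if j = h i then (if c i then z $ j else 0) else 0)"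
    by (rule sum.cong) auto
  also have "\<dots> = (if c i \<and> h i < nc then z $ h i else 0)"
    by (simp add: sum.delta)
  finally show ?thesis .
qed

lemma sel_mat_carrier[simp]: "mat nr nc f \<in> carrier_mat nr nc" by simp

definition shm :: "nat \<Rightarrow> complex mat" where
  "shm m = mat m m (\<lambda>(i,j). if j = i - 1 \<and> i \<noteq> 0 then 1 else 0)"
definition upm :: "nat \<Rightarrow> complex mat" where
  "upm m = mat m m (\<lambda>(i,j). if j = Suc i \<and> True then 1 else 0)"
definition tlm :: "nat \<Rightarrow> complex mat" where
  "tlm m = mat (m - 1) m (\<lambda>(i,j). if j = Suc i \<and> True then 1 else 0)"
definition e0m :: "nat \<Rightarrow> complex mat" where
  "e0m m = mat m (m - 1) (\<lambda>(i,j). if j = i - 1 \<and> i \<noteq> 0 then 1 else 0)"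
definition tkm :: "nat \<Rightarrow> complex mat" where
  "tkm m = mat (m - 1) m (\<lambda>(i,j). if j = id i \<and> True then 1 else 0)"
definition e1m :: "nat \<Rightarrow> complex mat" where
  "e1m m = mat m (m - 1) (\<lambda>(i,j). if j = id i \<and> True then 1 else 0)"

lemma shm_carrier[simp]: "shm m \<in> carrier_mat m m" and upm_carrier[simp]: "upm m \<in> carrier_mat m m"
  and tlm_carrier[simp]: "tlm m \<in> carrier_mat (m - 1) m" and e0m_carrier[simp]: "e0m m \<in> carrier_mat m (m - 1)"
  and tkm_carrier[simp]: "tkm m \<in> carrier_mat (m - 1) m" and e1m_carrier[simp]: "e1m m \<in> carrier_mat m (m - 1)"
  by (auto simp: shm_def upm_def tlm_def e0m_def tkm_def e1m_def)

lemma shm_vec: "i < m \<Longrightarrow> z \<in> carrier_vec m \<Longrightarrow> (shm m *\<^sub>v z) $ i = (if i = 0 then 0 else z $ (i - 1))"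
  unfolding shm_def by (subst sel_mat_vec) auto
lemma upm_vec: "i < m \<Longrightarrow> z \<in> carrier_vec m \<Longrightarrow> (upm m *\<^sub>v z) $ i = (if Suc i < m then z $ Suc i else 0)"
  unfolding upm_def by (subst sel_mat_vec) auto
lemma tlm_vec: "i < m - 1 \<Longrightarrow> z \<in> carrier_vec m \<Longrightarrow> (tlm m *\<^sub>v z) $ i = z $ Suc i"
  unfolding tlm_def by (subst sel_mat_vec) auto
lemma e0m_vec: "i < m \<Longrightarrow> z \<in> carrier_vec (m - 1) \<Longrightarrow> (e0m m *\<^sub>v z) $ i = (if i = 0 then 0 else z $ (i - 1))"
  unfolding e0m_def by (subst sel_mat_vec) auto
lemma tkm_vec: "i < m - 1 \<Longrightarrow> z \<in> carrier_vec m \<Longrightarrow> (tkm m *\<^sub>v z) $ i = z $ i"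
  unfolding tkm_def by (subst sel_mat_vec) auto
lemma e1m_vec: "i < m \<Longrightarrow> z \<in> carrier_vec (m - 1) \<Longrightarrow> (e1m m *\<^sub>v z) $ i = (if i < m - 1 then z $ i else 0)"
  unfolding e1m_def by (subst sel_mat_vec) auto

lemma shm_funpow:
  assumes z: "z \<in> carrier_vec m" and i: "i < m"
  shows "(((\<lambda>x. shm m *\<^sub>v x) ^^ k) z) $ i = (if k \<le> i then z $ (i - k) else 0)"
  using i
proof (induction k arbitrary: i)
  case 0 then show ?case by simp
next
  case (Suc k)
  have c: "((\<lambda>x. shm m *\<^sub>v x) ^^ k) z \<in> carrier_vec m" using funpow_carrier[OF shm_carrier z] .
  show ?case using Suc.prems c Suc.IH[of "i - 1"] by (auto simp: shm_vec)
qed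

lemma nilp_shm: assumes "m \<ge> 1" shows "nilp_order (shm m) m m"
proof -
  have "shm m ^\<^sub>m m = 0\<^sub>m m m"
  proof (rule mat_eq_vec[of _ m m])
    fix v :: "complex vec" assume v: "v \<in> carrier_vec m"
    show "shm m ^\<^sub>m m *\<^sub>v v = 0\<^sub>m m m *\<^sub>v v"
      using v funpow_carrier[OF shm_carrier v, of m]
      by (subst pow_funpow[OF shm_carrier v]) (intro eq_vecI, auto simp: shm_funpow)
  qed auto
  moreover have "shm m ^\<^sub>m (m - 1) \<noteq> 0\<^sub>m m m"
  proof
    assume h: "shm m ^\<^sub>m (m - 1) = 0\<^sub>m m m"
    have "(shm m ^\<^sub>m (m - 1) *\<^sub>v unit_vec m 0) $ (m - 1) = 1"
      using assms by (subst pow_funpow[OF shm_carrier]) (auto simp: shm_funpow)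
    then show False using h assms by simp
  qed
  ultimately show ?thesis unfolding nilp_order_def by auto
qed

lemma is_module_carriers:
  assumes "is_module T"
  shows "ta T \<in> carrier_mat (dim1 T) (dim0 T)" "tb T \<in> carrier_mat (dim1 T) (dim0 T)"
    "tas T \<in> carrier_mat (dim0 T) (dim1 T)" "tbs T \<in> carrier_mat (dim0 T) (dim1 T)"
  using assms unfolding is_module_def by auto

lemma pathmat_carrier:
  assumes "ta T \<in> carrier_mat (dim1 T) (dim0 T)" "tb T \<in> carrier_mat (dim1 T) (dim0 T)"
    "tas T \<in> carrier_mat (dim0 T) (dim1 T)" "tbs T \<in> carrier_mat (dim0 T) (dim1 T)"
  shows "pathmat T i cs \<in> carrier_mat (dimv T (if even (length cs) then i else \<not> i)) (dimv T i)"
proof (induction cs arbitrary: i)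
  case Nil then show ?case by (cases i) (auto simp: dimv_def)
next
  case (Cons c cs)
  show ?case
  proof (cases i)
    case True
    then show ?thesis using Cons.IH[of False] assms by (auto simp: dimv_def split: if_splits)
  next
    case False
    then show ?thesis using Cons.IH[of True] assms by (auto simp: dimv_def split: if_splits)
  qed
qed

locale L =
  fixes T :: rep and n :: nat and Ai P Q :: "complex mat"
  assumes n1: "1 \<le> n" and modT: "is_module T" and d0[simp]: "dim0 T = n" and d1[simp]: "dim1 T = n"
    and Ai[simp]: "Ai \<in> carrier_mat n n" and AAi: "ta T * Ai = 1\<^sub>m n" and AiA: "Ai * ta T = 1\<^sub>m n"
    and P[simp]: "P \<in> carrier_mat n n" and Q[simp]: "Q \<in> carrier_mat n n"
    and PQ: "P * Q = 1\<^sub>m n" and QP: "Q * P = 1\<^sub>m n"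
    and NP: "(tbs T * ta T) * P = P * shm n"
    and nilp: "(tbs T * ta T) ^\<^sub>m n = 0\<^sub>m n n"
begin

abbreviation "A \<equiv> ta T"
abbreviation "B \<equiv> tb T"
abbreviation "X \<equiv> tas T"
abbreviation "Y \<equiv> tbs T"
abbreviation "N \<equiv> Y * A"
abbreviation "J \<equiv> shm n"

lemma carr[simp]: "A \<in> carrier_mat n n" "B \<in> carrier_mat n n" "X \<in> carrier_mat n n" "Y \<in> carrier_mat n n"
  "N \<in> carrier_mat n n"
  using is_module_carriers[OF modT] by auto

lemma vcarr[simp]: "v \<in> carrier_vec n \<Longrightarrow> A *\<^sub>v v \<in> carrier_vec n"
  "v \<in> carrier_vec n \<Longrightarrow> B *\<^sub>v v \<in> carrier_vec n"
  "v \<in> carrier_vec n \<Longrightarrow> X *\<^sub>v v \<in> carrier_vec n"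
  "v \<in> carrier_vec n \<Longrightarrow> Y *\<^sub>v v \<in> carrier_vec n"
  "v \<in> carrier_vec n \<Longrightarrow> Ai *\<^sub>v v \<in> carrier_vec n"
  "v \<in> carrier_vec n \<Longrightarrow> P *\<^sub>v v \<in> carrier_vec n"
  "v \<in> carrier_vec n \<Longrightarrow> Q *\<^sub>v v \<in> carrier_vec n"
  "v \<in> carrier_vec n \<Longrightarrow> J *\<^sub>v v \<in> carrier_vec n"
  "v \<in> carrier_vec n \<Longrightarrow> upm n *\<^sub>v v \<in> carrier_vec n"
  "v \<in> carrier_vec n \<Longrightarrow> N *\<^sub>v v \<in> carrier_vec n"
  by (rule mult_mat_vec_carrier[of _ n n]; simp)+

lemma mcarr[simp]: "M \<in> carrier_mat n n \<Longrightarrow> M' \<in> carrier_mat n n \<Longrightarrow> M * M' \<in> carrier_mat n n"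
  by (rule mult_carrier_mat)
lemma mz[simp]: "M \<in> carrier_mat n n \<Longrightarrow> M *\<^sub>v 0\<^sub>v n = 0\<^sub>v n"
  by (rule mat_zero_vec)
lemma dims[simp]: "dim_row A = n" "dim_col A = n" "dim_row B = n" "dim_col B = n"
  "dim_row X = n" "dim_col X = n" "dim_row Y = n" "dim_col Y = n"
  "dim_row Ai = n" "dim_col Ai = n" "dim_row P = n" "dim_col P = n" "dim_row Q = n" "dim_col Q = n"
  "dim_row J = n" "dim_col J = n"
  using carr Ai P Q shm_carrier[of n] unfolding carrier_mat_def by auto
lemma mvcarr[simp]: "M \<in> carrier_mat n n \<Longrightarrow> v \<in> carrier_vec n \<Longrightarrow> M *\<^sub>v v \<in> carrier_vec n"
  by (rule mult_mat_vec_carrier)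

lemma rel1: "A * X + B * Y = 0\<^sub>m n n" and rel2: "X * A + Y * B = 0\<^sub>m n n"
  using modT unfolding is_module_def by auto

lemma PQv: "v \<in> carrier_vec n \<Longrightarrow> P *\<^sub>v (Q *\<^sub>v v) = v"
  using PQ by (subst assoc_mult_mat_vec[symmetric, of _ n n _ n]) auto
lemma QPv: "v \<in> carrier_vec n \<Longrightarrow> Q *\<^sub>v (P *\<^sub>v v) = v"
  using QP by (subst assoc_mult_mat_vec[symmetric, of _ n n _ n]) auto
lemma AAiv: "v \<in> carrier_vec n \<Longrightarrow> A *\<^sub>v (Ai *\<^sub>v v) = v"
  using AAi by (subst assoc_mult_mat_vec[symmetric, of _ n n _ n]) auto
lemma AiAv: "v \<in> carrier_vec n \<Longrightarrow> Ai *\<^sub>v (A *\<^sub>v v) = v"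
  using AiA by (subst assoc_mult_mat_vec[symmetric, of _ n n _ n]) auto

lemma Nv_def: "v \<in> carrier_vec n \<Longrightarrow> N *\<^sub>v v = Y *\<^sub>v (A *\<^sub>v v)"
  by (subst assoc_mult_mat_vec[of _ n n _ n]) auto

lemma NPv: "v \<in> carrier_vec n \<Longrightarrow> Y *\<^sub>v (A *\<^sub>v (P *\<^sub>v v)) = P *\<^sub>v (J *\<^sub>v v)"
proof -
  assume v: "v \<in> carrier_vec n"
  have "Y *\<^sub>v (A *\<^sub>v (P *\<^sub>v v)) = (N * P) *\<^sub>v v" using v by (simp add: assoc_mult_mat_vec[of _ n n _ n])
  also have "\<dots> = (P * J) *\<^sub>v v" using NP by simp
  also have "\<dots> = P *\<^sub>v (J *\<^sub>v v)" using v by (subst assoc_mult_mat_vec[of _ n n _ n]) auto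
  finally show ?thesis .
qed

lemma PJQv: "v \<in> carrier_vec n \<Longrightarrow> P *\<^sub>v (J *\<^sub>v (Q *\<^sub>v v)) = Y *\<^sub>v (A *\<^sub>v v)"
  using NPv[of "Q *\<^sub>v v"] PQv[of v] by simp

lemma QNv: "v \<in> carrier_vec n \<Longrightarrow> Q *\<^sub>v (Y *\<^sub>v (A *\<^sub>v v)) = J *\<^sub>v (Q *\<^sub>v v)"
proof -
  assume v: "v \<in> carrier_vec n"
  have "Y *\<^sub>v (A *\<^sub>v v) = Y *\<^sub>v (A *\<^sub>v (P *\<^sub>v (Q *\<^sub>v v)))" using PQv v by simp
  also have "\<dots> = P *\<^sub>v (J *\<^sub>v (Q *\<^sub>v v))" using v by (simp add: NPv)
  finally show ?thesis using v QPv by simp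
qed

lemma Yv: "w \<in> carrier_vec n \<Longrightarrow> Y *\<^sub>v w = Y *\<^sub>v (A *\<^sub>v (Ai *\<^sub>v w))"
  by (simp add: AAiv)

lemma vec_neg_eq: "v \<in> carrier_vec m \<Longrightarrow> w \<in> carrier_vec m \<Longrightarrow> v + w = 0\<^sub>v m \<Longrightarrow> v = - (w :: complex vec)"
  by (intro eq_vecI) (auto simp: vec_eq_iff eq_neg_iff_add_eq_0)

lemma Xv1: "w \<in> carrier_vec n \<Longrightarrow> X *\<^sub>v w = - (Y *\<^sub>v (B *\<^sub>v (Ai *\<^sub>v w)))"
proof -
  assume w: "w \<in> carrier_vec n"
  have "(X * A + Y * B) *\<^sub>v (Ai *\<^sub>v w) = 0\<^sub>v n" using rel2 w by simp
  moreover have "(X * A + Y * B) *\<^sub>v (Ai *\<^sub>v w) = (X * A) *\<^sub>v (Ai *\<^sub>v w) + (Y * B) *\<^sub>v (Ai *\<^sub>v w)"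
    using w by (intro add_mult_distrib_mat_vec[of _ n n]) auto
  ultimately have "X *\<^sub>v (A *\<^sub>v (Ai *\<^sub>v w)) + Y *\<^sub>v (B *\<^sub>v (Ai *\<^sub>v w)) = 0\<^sub>v n"
    using w by (simp add: assoc_mult_mat_vec[of _ n n _ n])
  then show ?thesis using w AAiv by (intro vec_neg_eq[of _ n]) auto
qed

lemma Xv2: "w \<in> carrier_vec n \<Longrightarrow> X *\<^sub>v w = - (Ai *\<^sub>v (B *\<^sub>v (Y *\<^sub>v w)))"
proof -
  assume w: "w \<in> carrier_vec n"
  have "Ai *\<^sub>v ((A * X + B * Y) *\<^sub>v w) = 0\<^sub>v n" using rel1 w by simp
  moreover have "(A * X + B * Y) *\<^sub>v w = (A * X) *\<^sub>v w + (B * Y) *\<^sub>v w"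
    using w by (intro add_mult_distrib_mat_vec[of _ n n]) auto
  moreover have "Ai *\<^sub>v ((A * X) *\<^sub>v w + (B * Y) *\<^sub>v w) = Ai *\<^sub>v ((A * X) *\<^sub>v w) + Ai *\<^sub>v ((B * Y) *\<^sub>v w)"
    using w by (intro mult_add_distrib_mat_vec[of _ n n]) auto
  ultimately have "Ai *\<^sub>v (A *\<^sub>v (X *\<^sub>v w)) + Ai *\<^sub>v (B *\<^sub>v (Y *\<^sub>v w)) = 0\<^sub>v n"
    using w by (simp add: assoc_mult_mat_vec[of _ n n _ n])
  then show ?thesis using w AiAv by (intro vec_neg_eq[of _ n]) auto
qed


end


context L begin

lemma funpow_N: "v \<in> carrier_vec n \<Longrightarrow> ((\<lambda>x. Y *\<^sub>v (A *\<^sub>v x)) ^^ k) v = (N ^\<^sub>m k) *\<^sub>v v"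
proof (induction k arbitrary: v)
  case 0 then show ?case by simp
next
  case (Suc k)
  have "((\<lambda>x. Y *\<^sub>v (A *\<^sub>v x)) ^^ Suc k) v = ((\<lambda>x. Y *\<^sub>v (A *\<^sub>v x)) ^^ k) (Y *\<^sub>v (A *\<^sub>v v))"
    by (simp add: funpow_Suc_right del: funpow.simps)
  also have "\<dots> = (N ^\<^sub>m k) *\<^sub>v (N *\<^sub>v v)" using Suc by (simp add: Nv_def)
  also have "\<dots> = (N ^\<^sub>m Suc k) *\<^sub>v v" using Suc.prems
    by (simp add: assoc_mult_mat_vec[of "N ^\<^sub>m k" n n N n] del: assoc_mult_mat_vec)
  finally show ?case .
qed

lemma funpow_N_n: "v \<in> carrier_vec n \<Longrightarrow> ((\<lambda>x. Y *\<^sub>v (A *\<^sub>v x)) ^^ n) v = 0\<^sub>v n"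
  using funpow_N nilp by simp

definition R0 where "R0 = {v \<in> carrier_vec n. (Q *\<^sub>v v) $ 0 = 0}"
definition KY where "KY = {w \<in> carrier_vec n. Y *\<^sub>v w = 0\<^sub>v n}"

lemma J_zero_iff: "z \<in> carrier_vec n \<Longrightarrow> J *\<^sub>v z = 0\<^sub>v n \<longleftrightarrow> (\<forall>i < n - 1. z $ i = 0)"
proof
  assume z: "z \<in> carrier_vec n" and h: "J *\<^sub>v z = 0\<^sub>v n"
  show "\<forall>i < n - 1. z $ i = 0"
  proof (intro allI impI)
    fix i assume i: "i < n - 1"
    have "(J *\<^sub>v z) $ Suc i = 0" using h i by simp
    then show "z $ i = 0" using i z shm_vec[of "Suc i" n z] by simp
  qed
next
  assume z: "z \<in> carrier_vec n" and h: "\<forall>i < n - 1. z $ i = 0"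
  show "J *\<^sub>v z = 0\<^sub>v n"
  proof (rule eq_vecI)
    fix i assume i: "i < dim_vec (0\<^sub>v n :: complex vec)"
    then show "(J *\<^sub>v z) $ i = 0\<^sub>v n $ i" using z h shm_vec[of i n z] by (cases i) auto
  qed simp
qed

lemma P_zero_iff: "z \<in> carrier_vec n \<Longrightarrow> P *\<^sub>v z = 0\<^sub>v n \<longleftrightarrow> z = 0\<^sub>v n"
  using QPv[of z] by auto

lemma KY_coord: "w \<in> carrier_vec n \<Longrightarrow> w \<in> KY \<longleftrightarrow> (\<forall>i < n - 1. (Q *\<^sub>v (Ai *\<^sub>v w)) $ i = 0)"
proof -
  assume w: "w \<in> carrier_vec n"
  have "Y *\<^sub>v w = P *\<^sub>v (J *\<^sub>v (Q *\<^sub>v (Ai *\<^sub>v w)))"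
    using w Yv[of w] PJQv[of "Ai *\<^sub>v w"] by simp
  then show ?thesis using w unfolding KY_def
    by (simp add: P_zero_iff J_zero_iff)
qed

lemma KY_zero: assumes w: "w \<in> KY" and z: "(Q *\<^sub>v (Ai *\<^sub>v w)) $ (n - 1) = 0"
  shows "w = 0\<^sub>v n"
proof -
  have wc: "w \<in> carrier_vec n" using w KY_def by auto
  have "\<forall>i < n - 1. (Q *\<^sub>v (Ai *\<^sub>v w)) $ i = 0" using KY_coord wc w by auto
  then have "Q *\<^sub>v (Ai *\<^sub>v w) = 0\<^sub>v n" using z wc
  proof (intro eq_vecI)
    fix i assume "\<forall>i < n - 1. (Q *\<^sub>v (Ai *\<^sub>v w)) $ i = 0" "i < dim_vec (0\<^sub>v n :: complex vec)"
    then show "(Q *\<^sub>v (Ai *\<^sub>v w)) $ i = 0\<^sub>v n $ i" using z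
    proof (cases "i < n - 1")
      case False
      then have "i = n - 1" using \<open>i < dim_vec (0\<^sub>v n :: complex vec)\<close> by simp
      then show ?thesis using z n1 by (simp del: index_mult_mat_vec)
    qed (auto simp del: index_mult_mat_vec)
  qed simp
  then have "P *\<^sub>v (Q *\<^sub>v (Ai *\<^sub>v w)) = 0\<^sub>v n" by simp
  then have "Ai *\<^sub>v w = 0\<^sub>v n" using PQv wc by simp
  then have "A *\<^sub>v (Ai *\<^sub>v w) = 0\<^sub>v n" by simp
  then show ?thesis using AAiv wc by simp
qed

lemma sub_zero: "subspace_of m {0\<^sub>v m}"
  unfolding subspace_of_def by auto

lemma KY_sub: "subspace_of n KY"
  unfolding subspace_of_def KY_def
  by (auto simp: mult_add_distrib_mat_vec[of _ n n] mat_smult_vec[of _ n n])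

lemma Xv_KY: "w \<in> KY \<Longrightarrow> X *\<^sub>v w = 0\<^sub>v n"
  using Xv2[of w] unfolding KY_def by auto

lemma submod_0_KY: "submod T {0\<^sub>v n} KY"
  unfolding submod_def using sub_zero KY_sub Xv_KY
  by (auto simp: KY_def subspace_of_def)

lemma span_sub: "w \<in> carrier_vec m \<Longrightarrow> subspace_of m {c \<cdot>\<^sub>v w | c. True}"
  unfolding subspace_of_def
proof (intro conjI ballI allI)
  assume w: "w \<in> carrier_vec m"
  show "0\<^sub>v m \<in> {c \<cdot>\<^sub>v w |c. True}" using w by (intro CollectI exI[of _ 0]) (auto intro!: eq_vecI)
  fix u v assume "u \<in> {c \<cdot>\<^sub>v w |c. True}" "v \<in> {c \<cdot>\<^sub>v w |c. True}"
  then obtain a b where "u = a \<cdot>\<^sub>v w" "v = b \<cdot>\<^sub>v w" by auto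
  then show "u + v \<in> {c \<cdot>\<^sub>v w |c. True}" using w
    by (intro CollectI exI[of _ "a + b"]) (auto intro!: eq_vecI simp: distrib_right)
next
  fix c u assume w: "w \<in> carrier_vec m" and "u \<in> {c \<cdot>\<^sub>v w |c. True}"
  then obtain a where "u = a \<cdot>\<^sub>v w" by auto
  then show "c \<cdot>\<^sub>v u \<in> {c \<cdot>\<^sub>v w |c. True}" using w
    by (intro CollectI exI[of _ "c * a"]) (auto intro!: eq_vecI)
qed (auto)

lemma subspace_zero: "subspace_of m U \<Longrightarrow> 0\<^sub>v m \<in> U"
  unfolding subspace_of_def by auto

lemma subspace_zero_only: "subspace_of m U \<Longrightarrow> U \<subseteq> {0\<^sub>v m} \<Longrightarrow> U = {0\<^sub>v m}"
  unfolding subspace_of_def by auto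

lemma simple_span: assumes w: "w \<in> KY" "w \<noteq> 0\<^sub>v n"
  shows "simple_submod T {0\<^sub>v n} {c \<cdot>\<^sub>v w | c. True}"
proof -
  have wc: "w \<in> carrier_vec n" using w KY_def by auto
  have spKY: "{c \<cdot>\<^sub>v w | c. True} \<subseteq> KY"
    using KY_sub w(1) unfolding subspace_of_def by auto
  have z0: "0\<^sub>v n \<in> {c \<cdot>\<^sub>v w | c. True}" using subspace_zero[OF span_sub[OF wc]] .
  have sm: "submod T {0\<^sub>v n} {c \<cdot>\<^sub>v w | c. True}"
  proof -
    have "\<forall>x\<in>{c \<cdot>\<^sub>v w | c. True}. X *\<^sub>v x \<in> {0\<^sub>v n} \<and> Y *\<^sub>v x \<in> {0\<^sub>v n}"
      using spKY Xv_KY by (auto simp: KY_def)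
    moreover have "\<forall>v\<in>{0\<^sub>v n}. A *\<^sub>v v \<in> {c \<cdot>\<^sub>v w | c. True} \<and> B *\<^sub>v v \<in> {c \<cdot>\<^sub>v w | c. True}"
      using z0 by simp
    ultimately show ?thesis unfolding submod_def using sub_zero span_sub[OF wc] by simp
  qed
  have ne: "{c \<cdot>\<^sub>v w | c. True} \<noteq> {0\<^sub>v n}"
  proof
    assume "{c \<cdot>\<^sub>v w | c. True} = {0\<^sub>v n}"
    moreover have "w \<in> {c \<cdot>\<^sub>v w | c. True}" by (intro CollectI exI[of _ 1]) auto
    ultimately show False using w by auto
  qed
  show ?thesis unfolding simple_submod_def
  proof (intro conjI allI impI)
    fix X0 X1 assume h: "submod T X0 X1 \<and> X0 \<subseteq> {0\<^sub>v n} \<and> X1 \<subseteq> {c \<cdot>\<^sub>v w |c. True}"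
    then have s0: "subspace_of n X0" and s1: "subspace_of n X1" unfolding submod_def by auto
    have X0: "X0 = {0\<^sub>v n}" using subspace_zero_only[OF s0] h by auto
    show "X0 = {0\<^sub>v (dim0 T)} \<and> X1 = {0\<^sub>v (dim1 T)} \<or> X0 = {0\<^sub>v n} \<and> X1 = {c \<cdot>\<^sub>v w |c. True}"
    proof (cases "X1 \<subseteq> {0\<^sub>v n}")
      case True then show ?thesis using subspace_zero_only[OF s1] X0 by auto
    next
      case False
      then obtain x where x: "x \<in> X1" "x \<noteq> 0\<^sub>v n" by auto
      then obtain a where a: "x = a \<cdot>\<^sub>v w" using h by auto
      have a0: "a \<noteq> 0" using a x wc by auto
      have "{c \<cdot>\<^sub>v w |c. True} \<subseteq> X1"
      proof
        fix y assume "y \<in> {c \<cdot>\<^sub>v w |c. True}"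
        then obtain b where b: "y = b \<cdot>\<^sub>v w" by auto
        have "(b / a) \<cdot>\<^sub>v x \<in> X1" using s1 x unfolding subspace_of_def by auto
        moreover have "(b / a) \<cdot>\<^sub>v x = y" using a b a0 wc by (auto intro!: eq_vecI)
        ultimately show "y \<in> X1" by simp
      qed
      then show ?thesis using h X0 by auto
    qed
  qed (use sm ne in auto)
qed

lemma first_zero:
  fixes f :: "nat \<Rightarrow> 'a"
  shows "f 0 \<noteq> z \<Longrightarrow> f m = z \<Longrightarrow> \<exists>k. f k \<noteq> z \<and> f (Suc k) = z"
  by (induction m) auto

lemma simple_char: assumes S: "simple_submod T U0 U1"
  shows "U0 = {0\<^sub>v n} \<and> U1 \<subseteq> KY"
proof -
  have sm: "submod T U0 U1" and nz: "U0 \<noteq> {0\<^sub>v n} \<or> U1 \<noteq> {0\<^sub>v n}"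
    using S unfolding simple_submod_def by auto
  have s0: "subspace_of n U0" and s1: "subspace_of n U1" using sm unfolding submod_def by auto
  have U1c: "U1 \<subseteq> carrier_vec n" using s1 unfolding subspace_of_def by auto
  have U0c: "U0 \<subseteq> carrier_vec n" using s0 unfolding subspace_of_def by auto
  have AU: "v \<in> U0 \<Longrightarrow> A *\<^sub>v v \<in> U1" for v using sm unfolding submod_def by auto
  have YU: "w \<in> U1 \<Longrightarrow> Y *\<^sub>v w \<in> U0" for w using sm unfolding submod_def by auto
  have sI: "subspace_of n (U1 \<inter> KY)" using s1 KY_sub unfolding subspace_of_def by auto
  have smI: "submod T {0\<^sub>v n} (U1 \<inter> KY)"
    unfolding submod_def using sub_zero sI Xv_KY subspace_zero[OF s1] subspace_zero[OF KY_sub]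
    by (auto simp: KY_def)
  have all: "\<forall>X0 X1. submod T X0 X1 \<and> X0 \<subseteq> U0 \<and> X1 \<subseteq> U1 \<longrightarrow>
        (X0 = {0\<^sub>v n} \<and> X1 = {0\<^sub>v n}) \<or> (X0 = U0 \<and> X1 = U1)"
    using S unfolding simple_submod_def by simp
  have pre: "submod T {0\<^sub>v n} (U1 \<inter> KY) \<and> {0\<^sub>v n} \<subseteq> U0 \<and> U1 \<inter> KY \<subseteq> U1"
    using smI subspace_zero[OF s0] by blast
  have "({0\<^sub>v n} = {0\<^sub>v n} \<and> U1 \<inter> KY = {0\<^sub>v n}) \<or> ({0\<^sub>v n} = U0 \<and> U1 \<inter> KY = U1)"
    using all[rule_format, OF pre] by simp
  moreover have "U1 \<inter> KY \<noteq> {0\<^sub>v n}"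
  proof -
    obtain w where w: "w \<in> U1" "w \<noteq> 0\<^sub>v n"
    proof (cases "U1 \<subseteq> {0\<^sub>v n}")
      case False then show ?thesis using that by auto
    next
      case True
      then have "U0 \<noteq> {0\<^sub>v n}" using nz subspace_zero_only[OF s1] by auto
      then obtain v where v: "v \<in> U0" "v \<noteq> 0\<^sub>v n" using subspace_zero[OF s0] by auto
      have "A *\<^sub>v v \<noteq> 0\<^sub>v n" using AiAv[of v] v U0c by auto
      then show ?thesis using that AU v by auto
    qed
    define s where "s k = ((\<lambda>x. A *\<^sub>v (Y *\<^sub>v x)) ^^ k) w" for k
    have sU: "s k \<in> U1" for k
      by (induction k) (auto simp: s_def w AU YU)
    have sc: "s k \<in> carrier_vec n" for k using sU U1c by auto
    have Ys: "Y *\<^sub>v s k = ((\<lambda>x. Y *\<^sub>v (A *\<^sub>v x)) ^^ k) (Y *\<^sub>v w)" for k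
      by (induction k) (auto simp: s_def)
    have "s (Suc n) = 0\<^sub>v n"
      using Ys[of n] funpow_N_n[of "Y *\<^sub>v w"] w U1c by (auto simp: s_def)
    moreover have "s 0 \<noteq> 0\<^sub>v n" using w by (simp add: s_def)
    ultimately obtain k where k: "s k \<noteq> 0\<^sub>v n" "s (Suc k) = 0\<^sub>v n" using first_zero[of s] by blast
    have "A *\<^sub>v (Y *\<^sub>v s k) = 0\<^sub>v n" using k(2) by (simp add: s_def)
    then have "Y *\<^sub>v s k = 0\<^sub>v n" using AiAv[of "Y *\<^sub>v s k"] sc by simp
    then have "s k \<in> U1 \<inter> KY" using sU sc by (auto simp: KY_def)
    then show ?thesis using k by auto
  qed
  ultimately show ?thesis by blast
qed

lemma soc0_eq: "soc0 T = {0\<^sub>v n}"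
proof -
  have "{0\<^sub>v n} \<in> {S. subspace_of (dim0 T) S \<and> (\<forall>U0 U1. simple_submod T U0 U1 \<longrightarrow> U0 \<subseteq> S)}"
    using sub_zero simple_char by auto
  moreover have "\<forall>S \<in> {S. subspace_of (dim0 T) S \<and> (\<forall>U0 U1. simple_submod T U0 U1 \<longrightarrow> U0 \<subseteq> S)}. 0\<^sub>v n \<in> S"
    using subspace_zero by auto
  ultimately show ?thesis unfolding soc0_def by blast
qed

lemma soc1_eq: "soc1 T = KY"
proof -
  have "KY \<in> {S. subspace_of (dim1 T) S \<and> (\<forall>U0 U1. simple_submod T U0 U1 \<longrightarrow> U1 \<subseteq> S)}"
    using KY_sub simple_char by auto
  moreover have "KY \<subseteq> S" if S: "S \<in> {S. subspace_of (dim1 T) S \<and> (\<forall>U0 U1. simple_submod T U0 U1 \<longrightarrow> U1 \<subseteq> S)}" for S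
  proof
    fix w assume w: "w \<in> KY"
    show "w \<in> S"
    proof (cases "w = 0\<^sub>v n")
      case True then show ?thesis using S subspace_zero by auto
    next
      case False
      then have "{c \<cdot>\<^sub>v w | c. True} \<subseteq> S" using S simple_span[OF w] by auto
      moreover have "w \<in> {c \<cdot>\<^sub>v w | c. True}" by (intro CollectI exI[of _ 1]) auto
      ultimately show ?thesis by auto
    qed
  qed
  ultimately show ?thesis unfolding soc1_def by blast
qed


lemma QAi_lin: "u \<in> carrier_vec n \<Longrightarrow> v \<in> carrier_vec n \<Longrightarrow>
    Q *\<^sub>v (Ai *\<^sub>v (u + v)) = Q *\<^sub>v (Ai *\<^sub>v u) + Q *\<^sub>v (Ai *\<^sub>v v)"
  "u \<in> carrier_vec n \<Longrightarrow> Q *\<^sub>v (Ai *\<^sub>v (c \<cdot>\<^sub>v u)) = c \<cdot>\<^sub>v (Q *\<^sub>v (Ai *\<^sub>v u))"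
  by (simp_all add: mult_add_distrib_mat_vec[of _ n n] mat_smult_vec[of _ n n])

lemma J_last: "J *\<^sub>v unit_vec n (n - 1) = 0\<^sub>v n"
proof (rule eq_vecI)
  fix i assume i: "i < dim_vec (0\<^sub>v n :: complex vec)"
  then show "(J *\<^sub>v unit_vec n (n - 1)) $ i = 0\<^sub>v n $ i"
    using shm_vec[of i n "unit_vec n (n - 1)"] by auto
qed simp

lemma carrier_vec_0: "carrier_vec 0 = {0\<^sub>v 0 :: complex vec}"
  by (auto intro!: eq_vecI)

lemma subquot_isoI:
  assumes "submod T K0 K1" "submod T W0 W1" "W0 \<subseteq> K0" "W1 \<subseteq> K1"
    "lin_on K0 f0" "lin_on K1 f1" "f0 ` K0 = carrier_vec (dim0 T')" "f1 ` K1 = carrier_vec (dim1 T')"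
    "\<forall>v\<in>K0. f0 v = 0\<^sub>v (dim0 T') \<longleftrightarrow> v \<in> W0"
    "\<forall>v\<in>K1. f1 v = 0\<^sub>v (dim1 T') \<longleftrightarrow> v \<in> W1"
    "\<forall>v\<in>K0. f1 (ta T *\<^sub>v v) = ta T' *\<^sub>v f0 v \<and> f1 (tb T *\<^sub>v v) = tb T' *\<^sub>v f0 v"
    "\<forall>w\<in>K1. f0 (tas T *\<^sub>v w) = tas T' *\<^sub>v f1 w \<and> f0 (tbs T *\<^sub>v w) = tbs T' *\<^sub>v f1 w"
  shows "subquot_iso T K0 K1 W0 W1 T'"
  unfolding subquot_iso_def using assms by blast

lemma iso_S1: "subquot_iso T (soc0 T) (soc1 T) {0\<^sub>v (dim0 T)} {0\<^sub>v (dim1 T)} S1"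
proof -
  define f0 :: "complex vec \<Rightarrow> complex vec" where "f0 = (\<lambda>_. 0\<^sub>v 0)"
  define f1 where "f1 = (\<lambda>w. vec 1 (\<lambda>_. (Q *\<^sub>v (Ai *\<^sub>v w)) $ (n - 1)))"
  have KYc: "w \<in> KY \<Longrightarrow> w \<in> carrier_vec n" for w by (auto simp: KY_def)
  have sm00: "submod T {0\<^sub>v n} {0\<^sub>v n}"
    unfolding submod_def using sub_zero by simp
  have lin0: "lin_on {0\<^sub>v n} f0" unfolding lin_on_def f0_def by (auto intro!: eq_vecI)
  have lin1: "lin_on KY f1" unfolding lin_on_def
  proof (intro conjI ballI allI)
    fix u v assume u: "u \<in> KY" and v: "v \<in> KY"
    show "f1 (u + v) = f1 u + f1 v" unfolding f1_def using QAi_lin(1)[OF KYc[OF u] KYc[OF v]] n1 KYc[OF u] KYc[OF v]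
      by (intro eq_vecI) (simp_all del: index_mult_mat_vec)
  next
    fix c u assume u: "u \<in> KY"
    show "f1 (c \<cdot>\<^sub>v u) = c \<cdot>\<^sub>v f1 u" unfolding f1_def using QAi_lin(2)[OF KYc[OF u]] n1 KYc[OF u]
      by (intro eq_vecI) (simp_all del: index_mult_mat_vec)
  qed
  have im0: "f0 ` {0\<^sub>v n} = carrier_vec (dim0 S1)" using carrier_vec_0 by (simp add: f0_def S1_def)
  have im1: "f1 ` KY = carrier_vec (dim1 S1)"
  proof
    show "f1 ` KY \<subseteq> carrier_vec (dim1 S1)" unfolding f1_def S1_def by auto
    show "carrier_vec (dim1 S1) \<subseteq> f1 ` KY"
    proof
      fix z :: "complex vec" assume z: "z \<in> carrier_vec (dim1 S1)"
      define w0 where "w0 = A *\<^sub>v (P *\<^sub>v unit_vec n (n - 1))"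
      have w0c: "w0 \<in> carrier_vec n" unfolding w0_def by simp
      have "Y *\<^sub>v w0 = 0\<^sub>v n" unfolding w0_def using NPv[of "unit_vec n (n - 1)"] J_last by simp
      then have "(z $ 0) \<cdot>\<^sub>v w0 \<in> KY" using KY_sub w0c unfolding subspace_of_def KY_def by auto
      moreover have "f1 ((z $ 0) \<cdot>\<^sub>v w0) = z"
      proof -
        have "Q *\<^sub>v (Ai *\<^sub>v w0) = unit_vec n (n - 1)" unfolding w0_def using AiAv QPv by simp
        then show ?thesis unfolding f1_def using z w0c n1 QAi_lin(2)[OF w0c, of "z $ 0"]
          by (auto intro!: eq_vecI simp: S1_def simp del: index_mult_mat_vec)
      qed
      ultimately show "z \<in> f1 ` KY" by (metis image_eqI)
    qed
  qed
  have ker1: "\<forall>v\<in>KY. f1 v = 0\<^sub>v (dim1 S1) \<longleftrightarrow> v \<in> {0\<^sub>v n}"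
  proof (intro ballI iffI)
    fix v assume v: "v \<in> KY" "f1 v = 0\<^sub>v (dim1 S1)"
    then have "f1 v $ 0 = 0" by (simp add: S1_def)
    then have "(Q *\<^sub>v (Ai *\<^sub>v v)) $ (n - 1) = 0" unfolding f1_def by simp
    then show "v \<in> {0\<^sub>v n}" using KY_zero v by simp
  next
    fix v :: "complex vec" assume "v \<in> {0\<^sub>v n}"
    then show "f1 v = 0\<^sub>v (dim1 S1)" unfolding f1_def S1_def using n1 by (auto intro!: eq_vecI)
  qed
  have c1: "\<forall>v\<in>{0\<^sub>v n}. f1 (A *\<^sub>v v) = ta S1 *\<^sub>v f0 v \<and> f1 (B *\<^sub>v v) = tb S1 *\<^sub>v f0 v"
    unfolding f1_def f0_def S1_def using n1 by (auto intro!: eq_vecI)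
  have c2: "\<forall>w\<in>KY. f0 (X *\<^sub>v w) = tas S1 *\<^sub>v f1 w \<and> f0 (Y *\<^sub>v w) = tbs S1 *\<^sub>v f1 w"
    unfolding f1_def f0_def S1_def by (auto intro!: eq_vecI)
  show ?thesis unfolding soc0_eq soc1_eq d0 d1
    by (rule subquot_isoI[OF submod_0_KY sm00 _ _ lin0 lin1 im0 im1 _ ker1 c1 c2])
       (use subspace_zero[OF KY_sub] in \<open>auto simp: f0_def S1_def\<close>)
qed


abbreviation "V \<equiv> carrier_vec n :: complex vec set"

lemma sub_V: "subspace_of m (carrier_vec m :: complex vec set)"
  unfolding subspace_of_def by auto

lemma Q_lin: "u \<in> carrier_vec n \<Longrightarrow> v \<in> carrier_vec n \<Longrightarrow> Q *\<^sub>v (u + v) = Q *\<^sub>v u + Q *\<^sub>v v"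
  "u \<in> carrier_vec n \<Longrightarrow> Q *\<^sub>v (c \<cdot>\<^sub>v u) = c \<cdot>\<^sub>v (Q *\<^sub>v u)"
  "u \<in> carrier_vec n \<Longrightarrow> Q *\<^sub>v (- u) = - (Q *\<^sub>v u)"
  by (simp_all add: mult_add_distrib_mat_vec[of _ n n] mat_smult_vec[of _ n n] mat_uminus_vec[of _ n n])

lemma R0_sub: "subspace_of n R0"
  unfolding subspace_of_def R0_def using n1 by (auto simp: Q_lin simp del: index_mult_mat_vec)

lemma R0c: "v \<in> R0 \<Longrightarrow> v \<in> carrier_vec n" by (simp add: R0_def)

lemma YR0: "w \<in> carrier_vec n \<Longrightarrow> Y *\<^sub>v w \<in> R0"
proof -
  assume w: "w \<in> carrier_vec n"
  have "Q *\<^sub>v (Y *\<^sub>v w) = J *\<^sub>v (Q *\<^sub>v (Ai *\<^sub>v w))" using Yv[OF w] QNv[of "Ai *\<^sub>v w"] w by simp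
  then show ?thesis unfolding R0_def using w n1 shm_vec[of 0 n "Q *\<^sub>v (Ai *\<^sub>v w)"]
    by (simp del: index_mult_mat_vec)
qed

lemma XR0: "w \<in> carrier_vec n \<Longrightarrow> X *\<^sub>v w \<in> R0"
proof -
  assume w: "w \<in> carrier_vec n"
  have y: "Y *\<^sub>v (B *\<^sub>v (Ai *\<^sub>v w)) \<in> R0" using YR0 w by simp
  then show ?thesis unfolding Xv1[OF w] R0_def using w n1 Q_lin(3)[of "Y *\<^sub>v (B *\<^sub>v (Ai *\<^sub>v w))"]
    by (simp del: index_mult_mat_vec)
qed

lemma submod_R0: "submod T R0 V"
  unfolding submod_def using R0_sub sub_V XR0 YR0 R0c by auto

lemma e0_notR0: "P *\<^sub>v unit_vec n 0 \<notin> R0"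
  unfolding R0_def using QPv[of "unit_vec n 0"] n1 by (simp del: index_mult_mat_vec)

lemma maximal_R0: "maximal_submod T R0 V"
  unfolding maximal_submod_def d0 d1
proof (intro conjI allI impI)
  show "submod T R0 V" by (rule submod_R0)
  show "R0 \<noteq> V \<or> V \<noteq> V" using e0_notR0 by auto
  fix X0 X1 assume h: "submod T X0 X1 \<and> R0 \<subseteq> X0 \<and> V \<subseteq> X1"
  then have s0: "subspace_of n X0" and s1: "subspace_of n X1" unfolding submod_def by auto
  have X1: "X1 = V" using h s1 unfolding subspace_of_def by auto
  show "X0 = R0 \<and> X1 = V \<or> X0 = V \<and> X1 = V"
  proof (cases "X0 \<subseteq> R0")
    case True then show ?thesis using h X1 by auto
  next
    case False
    then obtain x where x: "x \<in> X0" "x \<notin> R0" by auto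
    have xc: "x \<in> carrier_vec n" using x s0 unfolding subspace_of_def by auto
    have qx: "(Q *\<^sub>v x) $ 0 \<noteq> 0" using x xc by (simp add: R0_def)
    have "V \<subseteq> X0"
    proof
      fix v assume v: "v \<in> V"
      define c where "c = (Q *\<^sub>v v) $ 0 / (Q *\<^sub>v x) $ 0"
      define r where "r = v + (- c) \<cdot>\<^sub>v x"
      have rc: "r \<in> carrier_vec n" using v xc by (simp add: r_def)
      have "(Q *\<^sub>v r) $ 0 = (Q *\<^sub>v v) $ 0 + (- c) * (Q *\<^sub>v x) $ 0"
        unfolding r_def using v xc n1 Q_lin(1)[of v "(- c) \<cdot>\<^sub>v x"] Q_lin(2)[of x "- c"]
        by (simp del: index_mult_mat_vec)
      also have "\<dots> = 0" using qx by (simp add: c_def)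
      finally have "r \<in> R0" using rc by (simp add: R0_def)
      then have "r \<in> X0" using h by auto
      moreover have "c \<cdot>\<^sub>v x \<in> X0" using s0 x unfolding subspace_of_def by auto
      ultimately have "r + c \<cdot>\<^sub>v x \<in> X0" using s0 unfolding subspace_of_def by auto
      moreover have "r + c \<cdot>\<^sub>v x = v" unfolding r_def using v xc by (intro eq_vecI) auto
      ultimately show "v \<in> X0" by simp
    qed
    then show ?thesis using X1 s0 unfolding subspace_of_def by auto
  qed
qed

lemma Jupm: "y \<in> carrier_vec n \<Longrightarrow> y $ 0 = 0 \<Longrightarrow> J *\<^sub>v (upm n *\<^sub>v y) = y"
proof (rule eq_vecI)
  fix i assume y: "y \<in> carrier_vec n" "y $ 0 = 0" and i: "i < dim_vec y"
  have "i \<noteq> 0 \<Longrightarrow> (upm n *\<^sub>v y) $ (i - 1) = y $ i"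
    using upm_vec[of "i - 1" n y] i y by auto
  then show "(J *\<^sub>v (upm n *\<^sub>v y)) $ i = y $ i"
    using shm_vec[of i n "upm n *\<^sub>v y"] i y by (cases "i = 0") auto
qed simp

lemma R0_im: "r \<in> R0 \<Longrightarrow> r = Y *\<^sub>v (A *\<^sub>v (P *\<^sub>v (upm n *\<^sub>v (Q *\<^sub>v r))))"
proof -
  assume r: "r \<in> R0"
  have rc: "r \<in> carrier_vec n" using r R0c by auto
  have "Y *\<^sub>v (A *\<^sub>v (P *\<^sub>v (upm n *\<^sub>v (Q *\<^sub>v r)))) = P *\<^sub>v (J *\<^sub>v (upm n *\<^sub>v (Q *\<^sub>v r)))"
    using NPv rc by simp
  also have "\<dots> = P *\<^sub>v (Q *\<^sub>v r)" using Jupm[of "Q *\<^sub>v r"] r rc by (simp add: R0_def)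
  also have "\<dots> = r" using PQv rc by simp
  finally show ?thesis by simp
qed

abbreviation "Nf \<equiv> (\<lambda>x. Y *\<^sub>v (A *\<^sub>v x))"

lemma Nf_carr: "x \<in> carrier_vec n \<Longrightarrow> (Nf ^^ k) x \<in> carrier_vec n"
  by (induction k) auto

lemma Nf_add: "a \<in> carrier_vec n \<Longrightarrow> b \<in> carrier_vec n \<Longrightarrow> (Nf ^^ k) (a + b) = (Nf ^^ k) a + (Nf ^^ k) b"
  by (induction k) (auto simp: Nf_carr mult_add_distrib_mat_vec[of _ n n])

lemma sum_sub: assumes "subspace_of n U" "subspace_of n W"
  shows "subspace_of n {u + w | u w. u \<in> U \<and> w \<in> W}"
proof -
  have Uc: "U \<subseteq> carrier_vec n" and Wc: "W \<subseteq> carrier_vec n" using assms unfolding subspace_of_def by auto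
  show ?thesis unfolding subspace_of_def
  proof (intro conjI ballI allI)
    show "{u + w |u w. u \<in> U \<and> w \<in> W} \<subseteq> carrier_vec n" using Uc Wc by (auto intro!: add_carrier_vec)
    show "0\<^sub>v n \<in> {u + w |u w. u \<in> U \<and> w \<in> W}"
      using assms subspace_zero by (intro CollectI exI[of _ "0\<^sub>v n"]) auto
  next
    fix x y assume "x \<in> {u + w |u w. u \<in> U \<and> w \<in> W}" "y \<in> {u + w |u w. u \<in> U \<and> w \<in> W}"
    then obtain u1 w1 u2 w2 where xy: "x = u1 + w1" "y = u2 + w2" "u1 \<in> U" "u2 \<in> U" "w1 \<in> W" "w2 \<in> W" by auto
    have cc: "dim_vec u1 = n" "dim_vec u2 = n" "dim_vec w1 = n" "dim_vec w2 = n" using xy Uc Wc by auto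
    have "x + y = (u1 + u2) + (w1 + w2)" using xy cc by (intro eq_vecI) auto
    moreover have "u1 + u2 \<in> U" "w1 + w2 \<in> W" using assms xy unfolding subspace_of_def by auto
    ultimately show "x + y \<in> {u + w |u w. u \<in> U \<and> w \<in> W}" by blast
  next
    fix c x assume "x \<in> {u + w |u w. u \<in> U \<and> w \<in> W}"
    then obtain u1 w1 where xy: "x = u1 + w1" "u1 \<in> U" "w1 \<in> W" by auto
    have cc: "dim_vec u1 = n" "dim_vec w1 = n" using xy Uc Wc by auto
    have "c \<cdot>\<^sub>v x = c \<cdot>\<^sub>v u1 + c \<cdot>\<^sub>v w1" using xy cc by (intro eq_vecI) (auto simp: distrib_left)
    moreover have "c \<cdot>\<^sub>v u1 \<in> U" "c \<cdot>\<^sub>v w1 \<in> W" using assms xy unfolding subspace_of_def by auto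
    ultimately show "c \<cdot>\<^sub>v x \<in> {u + w |u w. u \<in> U \<and> w \<in> W}" by blast
  qed
qed

lemma max_char: assumes M: "maximal_submod T U0 U1"
  shows "R0 \<subseteq> U0 \<and> U1 = V"
proof -
  have sm: "submod T U0 U1" and prp: "U0 \<noteq> V \<or> U1 \<noteq> V"
    and all: "\<forall>X0 X1. submod T X0 X1 \<and> U0 \<subseteq> X0 \<and> U1 \<subseteq> X1 \<longrightarrow>
        (X0 = U0 \<and> X1 = U1) \<or> (X0 = V \<and> X1 = V)"
    using M unfolding maximal_submod_def by auto
  have s0: "subspace_of n U0" and s1: "subspace_of n U1" using sm unfolding submod_def by auto
  have U0c: "U0 \<subseteq> V" and U1c: "U1 \<subseteq> V" using s0 s1 unfolding subspace_of_def by auto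
  have AU: "v \<in> U0 \<Longrightarrow> A *\<^sub>v v \<in> U1" for v using sm unfolding submod_def by auto
  have YU: "w \<in> U1 \<Longrightarrow> Y *\<^sub>v w \<in> U0" for w using sm unfolding submod_def by auto
  define S where "S = {u + w | u w. u \<in> U0 \<and> w \<in> R0}"
  have sS: "subspace_of n S" unfolding S_def by (rule sum_sub[OF s0 R0_sub])
  have R0S: "R0 \<subseteq> S"
  proof
    fix r assume "r \<in> R0"
    then have "r = 0\<^sub>v n + r" "0\<^sub>v n \<in> U0" using R0c subspace_zero[OF s0] by auto
    then show "r \<in> S" using \<open>r \<in> R0\<close> unfolding S_def by blast
  qed
  have U0S: "U0 \<subseteq> S"
  proof
    fix u assume "u \<in> U0"
    then have "u = u + 0\<^sub>v n" "0\<^sub>v n \<in> R0" using U0c subspace_zero[OF R0_sub] by auto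
    then show "u \<in> S" using \<open>u \<in> U0\<close> unfolding S_def by blast
  qed
  have Sc: "S \<subseteq> V" using sS unfolding subspace_of_def by auto
  have smS: "submod T S V"
    unfolding submod_def using sS sub_V R0S XR0 YR0 Sc by auto
  have "(S = U0 \<and> V = U1) \<or> (S = V \<and> V = V)"
    using all[rule_format, of S V] smS U0S U1c by blast
  moreover have "S \<noteq> V"
  proof
    assume SV: "S = V"
    have NfU: "u \<in> U0 \<Longrightarrow> (Nf ^^ k) u \<in> U0" for u k
      by (induction k) (auto intro: AU YU)
    have key: "\<forall>v\<in>V. \<exists>u\<in>U0. \<exists>x\<in>V. v = u + (Nf ^^ k) x" for k
    proof (induction k)
      case 0
      show ?case
      proof
        fix v assume "v \<in> V"
        then show "\<exists>u\<in>U0. \<exists>x\<in>V. v = u + (Nf ^^ 0) x"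
          using subspace_zero[OF s0] by (intro bexI[of _ "0\<^sub>v n"] bexI[of _ v]) auto
      qed
    next
      case (Suc k)
      show ?case
      proof
        fix v assume v: "v \<in> V"
        obtain u x where ux: "u \<in> U0" "x \<in> V" "v = u + (Nf ^^ k) x" using Suc v by blast
        have "x \<in> S" using SV ux by simp
        then obtain u' r' where ur: "x = u' + r'" "u' \<in> U0" "r' \<in> R0" unfolding S_def by blast
        define x'' where "x'' = P *\<^sub>v (upm n *\<^sub>v (Q *\<^sub>v r'))"
        have x''c: "x'' \<in> V" using ur R0c by (simp add: x''_def)
        have r': "r' = Nf x''" using R0_im[OF ur(3)] by (simp add: x''_def)
        have u'c: "u' \<in> V" "r' \<in> V" using ur U0c R0c by auto
        have "(Nf ^^ k) x = (Nf ^^ k) u' + (Nf ^^ Suc k) x''"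
          using Nf_add[OF u'c] ur r' by (simp add: funpow_Suc_right del: funpow.simps)
        moreover have "(u + (Nf ^^ k) u') + (Nf ^^ Suc k) x'' = u + ((Nf ^^ k) u' + (Nf ^^ Suc k) x'')"
          using ux u'c x''c U0c Nf_carr by (intro assoc_add_vec) auto
        ultimately have "v = (u + (Nf ^^ k) u') + (Nf ^^ Suc k) x''"
          using ux by simp
        moreover have "u + (Nf ^^ k) u' \<in> U0" using NfU ur ux s0 unfolding subspace_of_def by auto
        ultimately show "\<exists>u\<in>U0. \<exists>x\<in>V. v = u + (Nf ^^ Suc k) x" using x''c by blast
      qed
    qed
    have "V \<subseteq> U0"
    proof
      fix v assume v: "v \<in> V"
      obtain u x where ux: "u \<in> U0" "x \<in> V" "v = u + (Nf ^^ n) x" using key[of n] v by blast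
      then have "v = u" using funpow_N_n U0c by auto
      then show "v \<in> U0" using ux by simp
    qed
    then have U0V: "U0 = V" using U0c by auto
    have "V \<subseteq> U1"
    proof
      fix w assume w: "w \<in> V"
      then have "A *\<^sub>v (Ai *\<^sub>v w) \<in> U1" using AU U0V by simp
      then show "w \<in> U1" using AAiv w by simp
    qed
    then show False using prp U0V U1c by auto
  qed
  ultimately show ?thesis using R0S by auto
qed

lemma rad0_eq: "rad0 T = R0"
proof -
  have "R0 \<in> {U0. \<exists>U1. maximal_submod T U0 U1}" using maximal_R0 by auto
  moreover have "R0 \<subseteq> U0" if "U0 \<in> {U0. \<exists>U1. maximal_submod T U0 U1}" for U0 using that max_char by auto
  moreover have "R0 \<subseteq> V" using R0c by auto
  ultimately show ?thesis unfolding rad0_def d0 by blast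
qed

lemma rad1_eq: "rad1 T = V"
  unfolding rad1_def d1 using max_char by auto

lemma iso_S0: "subquot_iso T (carrier_vec (dim0 T)) (carrier_vec (dim1 T)) (rad0 T) (rad1 T) S0"
proof -
  define f0 where "f0 = (\<lambda>v. vec 1 (\<lambda>_. (Q *\<^sub>v v) $ 0))"
  define f1 :: "complex vec \<Rightarrow> complex vec" where "f1 = (\<lambda>_. 0\<^sub>v 0)"
  have sVV: "submod T V V" unfolding submod_def using sub_V by simp
  have lin0: "lin_on V f0" unfolding lin_on_def f0_def using n1
    by (auto intro!: eq_vecI simp: Q_lin simp del: index_mult_mat_vec)
  have lin1: "lin_on V f1" unfolding lin_on_def f1_def by (auto intro!: eq_vecI)
  have im0: "f0 ` V = carrier_vec (dim0 S0)"
  proof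
    show "f0 ` V \<subseteq> carrier_vec (dim0 S0)" unfolding f0_def S0_def by auto
    show "carrier_vec (dim0 S0) \<subseteq> f0 ` V"
    proof
      fix z :: "complex vec" assume z: "z \<in> carrier_vec (dim0 S0)"
      have "f0 ((z $ 0) \<cdot>\<^sub>v (P *\<^sub>v unit_vec n 0)) = z"
        unfolding f0_def using z n1 Q_lin(2)[of "P *\<^sub>v unit_vec n 0" "z $ 0"] QPv[of "unit_vec n 0"]
        by (auto intro!: eq_vecI simp: S0_def simp del: index_mult_mat_vec)
      moreover have "(z $ 0) \<cdot>\<^sub>v (P *\<^sub>v unit_vec n 0) \<in> V" by simp
      ultimately show "z \<in> f0 ` V" by (metis image_eqI)
    qed
  qed
  have "f1 ` V = {0\<^sub>v 0}" unfolding f1_def using zero_carrier_vec[of n] by blast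
  then have im1: "f1 ` V = carrier_vec (dim1 S0)"
    using carrier_vec_0 by (simp add: S0_def)
  have ker0: "\<forall>v\<in>V. f0 v = 0\<^sub>v (dim0 S0) \<longleftrightarrow> v \<in> R0"
  proof
    fix v assume v: "v \<in> V"
    show "f0 v = 0\<^sub>v (dim0 S0) \<longleftrightarrow> v \<in> R0"
    proof
      assume "f0 v = 0\<^sub>v (dim0 S0)"
      then have "f0 v $ 0 = 0" by (simp add: S0_def)
      then show "v \<in> R0" using v unfolding f0_def R0_def by simp
    next
      assume "v \<in> R0" then show "f0 v = 0\<^sub>v (dim0 S0)"
        unfolding f0_def R0_def S0_def by (auto intro!: eq_vecI)
    qed
  qed
  have ker1: "\<forall>v\<in>V. f1 v = 0\<^sub>v (dim1 S0) \<longleftrightarrow> v \<in> V" by (auto simp: f1_def S0_def)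
  have c1: "\<forall>v\<in>V. f1 (A *\<^sub>v v) = ta S0 *\<^sub>v f0 v \<and> f1 (B *\<^sub>v v) = tb S0 *\<^sub>v f0 v"
    unfolding f1_def S0_def by (auto intro!: eq_vecI)
  have c2: "\<forall>w\<in>V. f0 (X *\<^sub>v w) = tas S0 *\<^sub>v f1 w \<and> f0 (Y *\<^sub>v w) = tbs S0 *\<^sub>v f1 w"
  proof
    fix w assume w: "w \<in> V"
    have "(Q *\<^sub>v (X *\<^sub>v w)) $ 0 = 0" "(Q *\<^sub>v (Y *\<^sub>v w)) $ 0 = 0" using XR0[OF w] YR0[OF w] by (auto simp: R0_def)
    then show "f0 (X *\<^sub>v w) = tas S0 *\<^sub>v f1 w \<and> f0 (Y *\<^sub>v w) = tbs S0 *\<^sub>v f1 w"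
      unfolding f0_def f1_def S0_def by (auto intro!: eq_vecI simp del: index_mult_mat_vec)
  qed
  show ?thesis unfolding rad0_eq rad1_eq d0 d1
    by (rule subquot_isoI[OF sVV submod_R0 _ _ lin0 lin1 im0 im1 ker0 ker1 c1 c2])
       (use R0c in auto)
qed


definition "mm = n - 1"
lemma n_mm: "n = Suc mm" using n1 by (simp add: mm_def)
abbreviation "W \<equiv> carrier_vec mm :: complex vec set"

lemma tcarr[simp]: "tlm n \<in> carrier_mat mm n" "tkm n \<in> carrier_mat mm n"
  "e0m n \<in> carrier_mat n mm" "e1m n \<in> carrier_mat n mm"
  using tlm_carrier[of n] tkm_carrier[of n] e0m_carrier[of n] e1m_carrier[of n] by (auto simp: mm_def)

lemma tdims[simp]: "dim_row (tlm n) = mm" "dim_col (tlm n) = n" "dim_row (tkm n) = mm" "dim_col (tkm n) = n"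
  "dim_row (e0m n) = n" "dim_col (e0m n) = mm" "dim_row (e1m n) = n" "dim_col (e1m n) = mm"
  using tcarr unfolding carrier_mat_def by auto

lemma tlm_vec': "i < mm \<Longrightarrow> z \<in> V \<Longrightarrow> (tlm n *\<^sub>v z) $ i = z $ Suc i"
  using tlm_vec[of i n z] by (simp add: mm_def)
lemma tkm_vec': "i < mm \<Longrightarrow> z \<in> V \<Longrightarrow> (tkm n *\<^sub>v z) $ i = z $ i"
  using tkm_vec[of i n z] by (simp add: mm_def)
lemma e0m_vec': "i < n \<Longrightarrow> z \<in> W \<Longrightarrow> (e0m n *\<^sub>v z) $ i = (if i = 0 then 0 else z $ (i - 1))"
  using e0m_vec[of i n z] by (simp add: mm_def)
lemma e1m_vec': "i < n \<Longrightarrow> z \<in> W \<Longrightarrow> (e1m n *\<^sub>v z) $ i = (if i < mm then z $ i else 0)"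
  using e1m_vec[of i n z] by (simp add: mm_def)

definition "f0 v = tlm n *\<^sub>v (Q *\<^sub>v v)"
definition "f1 w = tkm n *\<^sub>v (Q *\<^sub>v (Ai *\<^sub>v w))"
definition "g0 z = P *\<^sub>v (e0m n *\<^sub>v z)"
definition "g1 z = A *\<^sub>v (P *\<^sub>v (e1m n *\<^sub>v z))"
definition "F0m = tlm n * Q"
definition "F1m = tkm n * (Q * Ai)"
definition "G0m = P * e0m n"
definition "G1m = A * (P * e1m n)"

lemma Fcarr[simp]: "F0m \<in> carrier_mat mm n" "F1m \<in> carrier_mat mm n" "G0m \<in> carrier_mat n mm" "G1m \<in> carrier_mat n mm"
  unfolding F0m_def F1m_def G0m_def G1m_def
  by (auto intro!: mult_carrier_mat[of _ mm n _ n] mult_carrier_mat[of _ n n _ mm])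

lemma tvcarr[simp]: "v \<in> V \<Longrightarrow> tlm n *\<^sub>v v \<in> W" "v \<in> V \<Longrightarrow> tkm n *\<^sub>v v \<in> W"
  "z \<in> W \<Longrightarrow> e0m n *\<^sub>v z \<in> V" "z \<in> W \<Longrightarrow> e1m n *\<^sub>v z \<in> V"
  by (rule mult_mat_vec_carrier; simp)+

lemma fcarr[simp]: "v \<in> V \<Longrightarrow> f0 v \<in> W" "v \<in> V \<Longrightarrow> f1 v \<in> W" "z \<in> W \<Longrightarrow> g0 z \<in> V" "z \<in> W \<Longrightarrow> g1 z \<in> V"
  unfolding f0_def f1_def g0_def g1_def by simp_all

lemma F0m_v: "v \<in> V \<Longrightarrow> F0m *\<^sub>v v = f0 v"
  unfolding F0m_def f0_def by (rule assoc_mult_mat_vec[of _ mm n _ n]) auto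
lemma F1m_v: "v \<in> V \<Longrightarrow> F1m *\<^sub>v v = f1 v"
  unfolding F1m_def f1_def
  by (simp add: assoc_mult_mat_vec[of "tkm n" mm n _ n] assoc_mult_mat_vec[of Q n n Ai n] del: assoc_mult_mat_vec)
lemma G0m_v: "z \<in> W \<Longrightarrow> G0m *\<^sub>v z = g0 z"
  unfolding G0m_def g0_def by (rule assoc_mult_mat_vec[of _ n n _ mm]) auto
lemma G1m_v: "z \<in> W \<Longrightarrow> G1m *\<^sub>v z = g1 z"
proof -
  assume z: "z \<in> W"
  have c: "P * e1m n \<in> carrier_mat n mm" by (rule mult_carrier_mat[of _ n n]) simp_all
  have "(A * (P * e1m n)) *\<^sub>v z = A *\<^sub>v ((P * e1m n) *\<^sub>v z)" by (rule assoc_mult_mat_vec[of _ n n, OF _ c z]) simp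
  also have "(P * e1m n) *\<^sub>v z = P *\<^sub>v (e1m n *\<^sub>v z)" by (rule assoc_mult_mat_vec[of _ n n _ mm, OF _ _ z]) simp_all
  finally show ?thesis unfolding G1m_def g1_def .
qed

lemma comp_v: assumes "M \<in> carrier_mat n n" "z \<in> W"
  shows "(F0m * (M * G1m)) *\<^sub>v z = f0 (M *\<^sub>v g1 z)" "(F1m * (M * G0m)) *\<^sub>v z = f1 (M *\<^sub>v g0 z)"
proof -
  show "(F0m * (M * G1m)) *\<^sub>v z = f0 (M *\<^sub>v g1 z)"
    using assms by (simp add: assoc_mult_mat_vec[of F0m mm n _ mm] assoc_mult_mat_vec[of M n n _ mm] F0m_v G1m_v
        del: assoc_mult_mat_vec)
  show "(F1m * (M * G0m)) *\<^sub>v z = f1 (M *\<^sub>v g0 z)"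
    using assms by (simp add: assoc_mult_mat_vec[of F1m mm n _ mm] assoc_mult_mat_vec[of M n n _ mm] F1m_v G0m_v
        del: assoc_mult_mat_vec)
qed

lemma g0_R0: "z \<in> W \<Longrightarrow> g0 z \<in> R0"
  unfolding R0_def g0_def using QPv n1 e0m_vec'[of 0 z] by (simp del: index_mult_mat_vec)

lemma f0g0: "z \<in> W \<Longrightarrow> f0 (g0 z) = z"
proof (rule eq_vecI)
  fix i assume z: "z \<in> W" and i: "i < dim_vec z"
  then have i': "i < mm" "Suc i < n" using n_mm by auto
  show "f0 (g0 z) $ i = z $ i" unfolding f0_def g0_def
    using QPv[of "e0m n *\<^sub>v z"] z i' tlm_vec'[of i "Q *\<^sub>v (P *\<^sub>v (e0m n *\<^sub>v z))"] e0m_vec'[of "Suc i" z]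
    by (simp del: index_mult_mat_vec)
qed (simp add: f0_def)

lemma e0tlm: "y \<in> V \<Longrightarrow> y $ 0 = 0 \<Longrightarrow> e0m n *\<^sub>v (tlm n *\<^sub>v y) = y"
proof (rule eq_vecI)
  fix i assume y: "y \<in> V" "y $ 0 = 0" and i: "i < dim_vec y"
  have tc: "tlm n *\<^sub>v y \<in> W" using y by simp
  have iv: "i < n" using i y by simp
  show "(e0m n *\<^sub>v (tlm n *\<^sub>v y)) $ i = y $ i"
  proof (cases "i = 0")
    case True then show ?thesis using e0m_vec'[OF iv tc] y by (simp del: index_mult_mat_vec)
  next
    case False
    then have "i - 1 < mm" using iv n_mm by simp
    then have "(tlm n *\<^sub>v y) $ (i - 1) = y $ i" using tlm_vec'[of "i - 1" y] y False by simp
    then show ?thesis using e0m_vec'[OF iv tc] False by (simp del: index_mult_mat_vec)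
  qed
qed (simp add: tlm_def e0m_def)

lemma g0f0: "v \<in> R0 \<Longrightarrow> g0 (f0 v) = v"
proof -
  assume v: "v \<in> R0"
  have vc: "v \<in> V" and q: "(Q *\<^sub>v v) $ 0 = 0" using v by (auto simp: R0_def)
  have "e0m n *\<^sub>v (tlm n *\<^sub>v (Q *\<^sub>v v)) = Q *\<^sub>v v" using e0tlm[of "Q *\<^sub>v v"] vc q by simp
  then show ?thesis unfolding g0_def f0_def using PQv[OF vc] by simp
qed

lemma f1g1: "z \<in> W \<Longrightarrow> f1 (g1 z) = z"
proof (rule eq_vecI)
  fix i assume z: "z \<in> W" and i: "i < dim_vec z"
  then have i': "i < mm" "i < n" using n_mm by auto
  have "Q *\<^sub>v (Ai *\<^sub>v g1 z) = e1m n *\<^sub>v z" unfolding g1_def using AiAv QPv z by simp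
  then show "f1 (g1 z) $ i = z $ i" unfolding f1_def
    using z i' tkm_vec'[of i "Q *\<^sub>v (Ai *\<^sub>v g1 z)"] e1m_vec'[of i z]
    by (simp del: index_mult_mat_vec)
qed (simp add: f1_def)

lemma Je1tkm: "y \<in> V \<Longrightarrow> J *\<^sub>v (e1m n *\<^sub>v (tkm n *\<^sub>v y)) = J *\<^sub>v y"
proof (rule eq_vecI)
  fix i assume y: "y \<in> V" and i: "i < dim_vec (J *\<^sub>v y)"
  have iv: "i < n" using i by simp
  have tc: "tkm n *\<^sub>v y \<in> W" using y by simp
  have ec: "e1m n *\<^sub>v (tkm n *\<^sub>v y) \<in> V" using tc by simp
  show "(J *\<^sub>v (e1m n *\<^sub>v (tkm n *\<^sub>v y))) $ i = (J *\<^sub>v y) $ i"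
  proof (cases "i = 0")
    case True then show ?thesis using shm_vec[OF iv ec] shm_vec[OF iv y] by (simp del: index_mult_mat_vec)
  next
    case False
    then have i1: "i - 1 < mm" "i - 1 < n" using iv n_mm by auto
    have "(e1m n *\<^sub>v (tkm n *\<^sub>v y)) $ (i - 1) = y $ (i - 1)"
      using e1m_vec'[OF i1(2) tc] tkm_vec'[OF i1(1) y] i1 by (simp del: index_mult_mat_vec)
    then show ?thesis using shm_vec[OF iv ec] shm_vec[OF iv y] False by (simp del: index_mult_mat_vec)
  qed
qed simp

lemma Yg1f1: "w \<in> V \<Longrightarrow> Y *\<^sub>v g1 (f1 w) = Y *\<^sub>v w"
proof -
  assume w: "w \<in> V"
  let ?y = "Q *\<^sub>v (Ai *\<^sub>v w)"
  have tc: "tkm n *\<^sub>v ?y \<in> W" using w by (auto intro!: mult_mat_vec_carrier[of _ mm n])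
  have ec: "e1m n *\<^sub>v (tkm n *\<^sub>v ?y) \<in> V" using tc by (auto intro!: mult_mat_vec_carrier[of _ n mm])
  have "Y *\<^sub>v g1 (f1 w) = P *\<^sub>v (J *\<^sub>v (e1m n *\<^sub>v (tkm n *\<^sub>v ?y)))"
    unfolding g1_def f1_def using NPv[OF ec] .
  also have "\<dots> = P *\<^sub>v (J *\<^sub>v ?y)" using Je1tkm w by simp
  also have "\<dots> = Y *\<^sub>v w" using PJQv[of "Ai *\<^sub>v w"] w AAiv by simp
  finally show ?thesis .
qed

lemma Xg1f1: "w \<in> V \<Longrightarrow> X *\<^sub>v g1 (f1 w) = X *\<^sub>v w"
  using Xv2 Yg1f1 by simp

lemma f1_KY: "w \<in> V \<Longrightarrow> f1 w = 0\<^sub>v mm \<longleftrightarrow> w \<in> KY"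
proof -
  assume w: "w \<in> V"
  have fc: "f1 w \<in> W" using w by simp
  have a: "f1 w = 0\<^sub>v mm \<longleftrightarrow> (\<forall>i<mm. f1 w $ i = 0)" using fc by (auto simp: vec_eq_iff)
  have b: "\<forall>i<mm. f1 w $ i = (Q *\<^sub>v (Ai *\<^sub>v w)) $ i" unfolding f1_def using tkm_vec' w by simp
  have "f1 w = 0\<^sub>v mm \<longleftrightarrow> (\<forall>i < n - 1. (Q *\<^sub>v (Ai *\<^sub>v w)) $ i = 0)"
    using a b by (simp add: mm_def del: index_mult_mat_vec)
  then show ?thesis using KY_coord w by simp
qed

lemma f0_zero: "v \<in> R0 \<Longrightarrow> f0 v = 0\<^sub>v mm \<longleftrightarrow> v = 0\<^sub>v n"
proof
  assume v: "v \<in> R0" and h: "f0 v = 0\<^sub>v mm"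
  have "v = g0 (f0 v)" using g0f0 v by simp
  also have "\<dots> = 0\<^sub>v n" unfolding h g0_def by (simp add: mat_zero_vec[of _ n mm])
  finally show "v = 0\<^sub>v n" .
next
  assume "v = 0\<^sub>v n" then show "f0 v = 0\<^sub>v mm" unfolding f0_def by (simp add: mat_zero_vec[of _ mm n])
qed

lemma f0_lin: "u \<in> V \<Longrightarrow> v \<in> V \<Longrightarrow> f0 (u + v) = f0 u + f0 v" "u \<in> V \<Longrightarrow> f0 (c \<cdot>\<^sub>v u) = c \<cdot>\<^sub>v f0 u"
  unfolding f0_def by (simp_all add: Q_lin mult_add_distrib_mat_vec[of _ mm n] mat_smult_vec[of _ mm n])
lemma f1_lin: "u \<in> V \<Longrightarrow> v \<in> V \<Longrightarrow> f1 (u + v) = f1 u + f1 v" "u \<in> V \<Longrightarrow> f1 (c \<cdot>\<^sub>v u) = c \<cdot>\<^sub>v f1 u"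
  unfolding f1_def by (simp_all add: QAi_lin mult_add_distrib_mat_vec[of _ mm n] mat_smult_vec[of _ mm n])

definition "T' = \<lparr>dim0 = mm, dim1 = mm, ta = F1m * (A * G0m), tb = F1m * (B * G0m),
   tas = F0m * (X * G1m), tbs = F0m * (Y * G1m)\<rparr>"

lemma T'carr: "ta T' \<in> carrier_mat mm mm" "tb T' \<in> carrier_mat mm mm" "tas T' \<in> carrier_mat mm mm" "tbs T' \<in> carrier_mat mm mm"
  unfolding T'_def by (auto intro!: mult_carrier_mat[of _ mm n _ mm] mult_carrier_mat[of _ n n _ mm])

lemma T'v: "z \<in> W \<Longrightarrow> ta T' *\<^sub>v z = f1 (A *\<^sub>v g0 z)" "z \<in> W \<Longrightarrow> tb T' *\<^sub>v z = f1 (B *\<^sub>v g0 z)"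
  "z \<in> W \<Longrightarrow> tas T' *\<^sub>v z = f0 (X *\<^sub>v g1 z)" "z \<in> W \<Longrightarrow> tbs T' *\<^sub>v z = f0 (Y *\<^sub>v g1 z)"
  unfolding T'_def by (simp_all add: comp_v)

lemma Rc_sub: "KY \<subseteq> V" by (auto simp: KY_def)

lemma iso_T': "subquot_iso T R0 V {0\<^sub>v n} KY T'"
proof -
  have lin0: "lin_on R0 f0" unfolding lin_on_def using f0_lin R0c by auto
  have lin1: "lin_on V f1" unfolding lin_on_def using f1_lin by auto
  have im0: "f0 ` R0 = carrier_vec (dim0 T')"
  proof
    show "f0 ` R0 \<subseteq> carrier_vec (dim0 T')" using R0c by (auto simp: T'_def)
    show "carrier_vec (dim0 T') \<subseteq> f0 ` R0"
    proof
      fix z :: "complex vec" assume "z \<in> carrier_vec (dim0 T')"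
      then have z: "z \<in> W" by (simp add: T'_def)
      then show "z \<in> f0 ` R0" using f0g0[OF z] g0_R0[OF z] by (metis image_eqI)
    qed
  qed
  have im1: "f1 ` V = carrier_vec (dim1 T')"
  proof
    show "f1 ` V \<subseteq> carrier_vec (dim1 T')" by (auto simp: T'_def)
    show "carrier_vec (dim1 T') \<subseteq> f1 ` V"
    proof
      fix z :: "complex vec" assume "z \<in> carrier_vec (dim1 T')"
      then have z: "z \<in> W" by (simp add: T'_def)
      then show "z \<in> f1 ` V" using f1g1[OF z] fcarr(4)[OF z] by (metis image_eqI)
    qed
  qed
  have ker0: "\<forall>v\<in>R0. f0 v = 0\<^sub>v (dim0 T') \<longleftrightarrow> v \<in> {0\<^sub>v n}" using f0_zero by (simp add: T'_def)
  have ker1: "\<forall>v\<in>V. f1 v = 0\<^sub>v (dim1 T') \<longleftrightarrow> v \<in> KY" using f1_KY by (simp add: T'_def)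
  have c1: "\<forall>v\<in>R0. f1 (A *\<^sub>v v) = ta T' *\<^sub>v f0 v \<and> f1 (B *\<^sub>v v) = tb T' *\<^sub>v f0 v"
  proof
    fix v assume v: "v \<in> R0"
    then have "f0 v \<in> W" using R0c by simp
    then show "f1 (A *\<^sub>v v) = ta T' *\<^sub>v f0 v \<and> f1 (B *\<^sub>v v) = tb T' *\<^sub>v f0 v"
      using T'v(1,2) g0f0[OF v] by simp
  qed
  have c2: "\<forall>w\<in>V. f0 (X *\<^sub>v w) = tas T' *\<^sub>v f1 w \<and> f0 (Y *\<^sub>v w) = tbs T' *\<^sub>v f1 w"
  proof
    fix w assume w: "w \<in> V"
    then have "f1 w \<in> W" by simp
    then show "f0 (X *\<^sub>v w) = tas T' *\<^sub>v f1 w \<and> f0 (Y *\<^sub>v w) = tbs T' *\<^sub>v f1 w"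
      using T'v(3,4) Xg1f1[OF w] Yg1f1[OF w] by simp
  qed
  show ?thesis
    by (rule subquot_isoI[OF submod_R0 submod_0_KY _ Rc_sub lin0 lin1 im0 im1 ker0 ker1 c1 c2])
       (use subspace_zero[OF R0_sub] in auto)
qed

lemma T'dims[simp]: "dim0 T' = mm" "dim1 T' = mm" by (simp_all add: T'_def)

lemma f1_zero: "f1 (0\<^sub>v n) = 0\<^sub>v mm" unfolding f1_def by (simp add: mat_zero_vec[of _ mm n])
lemma f0_zero': "f0 (0\<^sub>v n) = 0\<^sub>v mm" unfolding f0_def by (simp add: mat_zero_vec[of _ mm n])

lemma T'rel1: "ta T' * tas T' + tb T' * tbs T' = 0\<^sub>m mm mm"
proof (rule mat_eq_vec[of _ mm mm])
  show "ta T' * tas T' + tb T' * tbs T' \<in> carrier_mat mm mm" using T'carr by auto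
  show "0\<^sub>m mm mm \<in> carrier_mat mm mm" by simp
  fix z :: "complex vec" assume z: "z \<in> W"
  let ?y = "g1 z"
  have y: "?y \<in> V" using z by simp
  have "(ta T' * tas T' + tb T' * tbs T') *\<^sub>v z = ta T' *\<^sub>v (tas T' *\<^sub>v z) + tb T' *\<^sub>v (tbs T' *\<^sub>v z)"
    using T'carr z by (simp add: add_mult_distrib_mat_vec[of _ mm mm] assoc_mult_mat_vec[of _ mm mm _ mm])
  also have "\<dots> = f1 (A *\<^sub>v (X *\<^sub>v ?y)) + f1 (B *\<^sub>v (Y *\<^sub>v ?y))"
    using T'v z y XR0[OF y] YR0[OF y] R0c g0f0 by simp
  also have "\<dots> = f1 (A *\<^sub>v (X *\<^sub>v ?y) + B *\<^sub>v (Y *\<^sub>v ?y))" using f1_lin y by simp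
  also have "A *\<^sub>v (X *\<^sub>v ?y) + B *\<^sub>v (Y *\<^sub>v ?y) = 0\<^sub>v n"
  proof -
    have "(A * X + B * Y) *\<^sub>v ?y = (A * X) *\<^sub>v ?y + (B * Y) *\<^sub>v ?y"
      using y by (intro add_mult_distrib_mat_vec[of _ n n]) auto
    then show ?thesis using rel1 y by (simp add: assoc_mult_mat_vec[of _ n n _ n])
  qed
  finally show "(ta T' * tas T' + tb T' * tbs T') *\<^sub>v z = 0\<^sub>m mm mm *\<^sub>v z" using f1_zero z by simp
qed

lemma T'rel2: "tas T' * ta T' + tbs T' * tb T' = 0\<^sub>m mm mm"
proof (rule mat_eq_vec[of _ mm mm])
  show "tas T' * ta T' + tbs T' * tb T' \<in> carrier_mat mm mm" using T'carr by auto
  show "0\<^sub>m mm mm \<in> carrier_mat mm mm" by simp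
  fix z :: "complex vec" assume z: "z \<in> W"
  let ?v = "g0 z"
  have v: "?v \<in> V" using z by simp
  have "(tas T' * ta T' + tbs T' * tb T') *\<^sub>v z = tas T' *\<^sub>v (ta T' *\<^sub>v z) + tbs T' *\<^sub>v (tb T' *\<^sub>v z)"
    using T'carr z by (simp add: add_mult_distrib_mat_vec[of _ mm mm] assoc_mult_mat_vec[of _ mm mm _ mm])
  also have "\<dots> = f0 (X *\<^sub>v (A *\<^sub>v ?v)) + f0 (Y *\<^sub>v (B *\<^sub>v ?v))"
    using T'v z v Xg1f1 Yg1f1 by simp
  also have "\<dots> = f0 (X *\<^sub>v (A *\<^sub>v ?v) + Y *\<^sub>v (B *\<^sub>v ?v))" using f0_lin v by simp
  also have "X *\<^sub>v (A *\<^sub>v ?v) + Y *\<^sub>v (B *\<^sub>v ?v) = 0\<^sub>v n"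
  proof -
    have "(X * A + Y * B) *\<^sub>v ?v = (X * A) *\<^sub>v ?v + (Y * B) *\<^sub>v ?v"
      using v by (intro add_mult_distrib_mat_vec[of _ n n]) auto
    then show ?thesis using rel2 v by (simp add: assoc_mult_mat_vec[of _ n n _ n])
  qed
  finally show "(tas T' * ta T' + tbs T' * tb T') *\<^sub>v z = 0\<^sub>m mm mm *\<^sub>v z" using f0_zero' z by simp
qed

definition "KK i = (if i then V else R0)"
definition "ff i = (if i then f1 else f0)"
definition "gg i = (if i then g1 else g0)"

lemma pT_carr: "pathmat T i cs \<in> carrier_mat n n"
  using pathmat_carrier[OF is_module_carriers[OF modT], of i cs]
  by (cases i; cases "even (length cs)") (simp_all add: dimv_def)
lemma pT'_carr: "pathmat T' i cs \<in> carrier_mat mm mm"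
  using pathmat_carrier[of T' i cs] T'carr
  by (cases i; cases "even (length cs)") (simp_all add: dimv_def)

lemma KKc: "v \<in> KK i \<Longrightarrow> v \<in> V" using R0c by (auto simp: KK_def split: if_splits)
lemma ffc: "v \<in> V \<Longrightarrow> ff i v \<in> W" by (simp add: ff_def)

lemma path_inter:
  "v \<in> KK i \<Longrightarrow> pathmat T i cs *\<^sub>v v \<in> KK (if even (length cs) then i else \<not> i) \<and>
     pathmat T' i cs *\<^sub>v ff i v = ff (if even (length cs) then i else \<not> i) (pathmat T i cs *\<^sub>v v)"
proof (induction cs arbitrary: i v)
  case Nil
  have "v \<in> V" using KKc[OF Nil] .
  moreover have "ff i v \<in> W" using ffc[OF \<open>v \<in> V\<close>] .
  ultimately show ?case using Nil by (cases i) (auto simp: mm_def)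
next
  case (Cons c cs)
  have vV: "v \<in> V" using KKc[OF Cons.prems] .
  show ?case
  proof (cases i)
    case False
    let ?Ar = "if c then A else B"
    let ?Ar' = "if c then ta T' else tb T'"
    have v0: "v \<in> R0" using Cons.prems False by (simp add: KK_def)
    have ArK: "?Ar *\<^sub>v v \<in> KK True" using vV by (simp add: KK_def)
    note IH = Cons.IH[OF ArK]
    have e1: "pathmat T False (c # cs) *\<^sub>v v = pathmat T True cs *\<^sub>v (?Ar *\<^sub>v v)"
      using pT_carr[of True cs] vV by (simp add: assoc_mult_mat_vec[of _ n n _ n] del: assoc_mult_mat_vec)
    have Ar'c: "?Ar' \<in> carrier_mat mm mm" using T'carr by simp
    have fv: "f0 v \<in> W" using vV by simp
    have e2: "pathmat T' False (c # cs) *\<^sub>v f0 v = pathmat T' True cs *\<^sub>v (?Ar' *\<^sub>v f0 v)"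
      using pT'_carr[of True cs] Ar'c fv by (simp add: assoc_mult_mat_vec[of _ mm mm _ mm] del: assoc_mult_mat_vec)
    have e3: "?Ar' *\<^sub>v f0 v = f1 (?Ar *\<^sub>v v)" using T'v(1,2)[OF fv] g0f0[OF v0] by simp
    have iF: "i = False" using False by simp
    have endeq: "(if even (length (c # cs)) then False else \<not> False) = (if even (length cs) then True else \<not> True)"
      by simp
    have A2: "pathmat T' False (c # cs) *\<^sub>v ff False v = pathmat T' True cs *\<^sub>v ff True (?Ar *\<^sub>v v)"
      unfolding ff_def if_True if_False using e2 e3 by simp
    show ?thesis unfolding iF endeq e1 A2 using IH by blast
  next
    case True
    let ?Ar = "if c then X else Y"
    let ?Ar' = "if c then tas T' else tbs T'"
    have ArK: "?Ar *\<^sub>v v \<in> KK False" using vV XR0 YR0 by (simp add: KK_def)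
    note IH = Cons.IH[OF ArK]
    have e1: "pathmat T True (c # cs) *\<^sub>v v = pathmat T False cs *\<^sub>v (?Ar *\<^sub>v v)"
      using pT_carr[of False cs] vV by (simp add: assoc_mult_mat_vec[of _ n n _ n] del: assoc_mult_mat_vec)
    have Ar'c: "?Ar' \<in> carrier_mat mm mm" using T'carr by simp
    have fv: "f1 v \<in> W" using vV by simp
    have e2: "pathmat T' True (c # cs) *\<^sub>v f1 v = pathmat T' False cs *\<^sub>v (?Ar' *\<^sub>v f1 v)"
      using pT'_carr[of False cs] Ar'c fv by (simp add: assoc_mult_mat_vec[of _ mm mm _ mm] del: assoc_mult_mat_vec)
    have e3: "?Ar' *\<^sub>v f1 v = f0 (?Ar *\<^sub>v v)" using T'v(3,4)[OF fv] Xg1f1[OF vV] Yg1f1[OF vV] by simp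
    have iT: "i = True" using True by simp
    have endeq: "(if even (length (c # cs)) then True else \<not> True) = (if even (length cs) then False else \<not> False)"
      by simp
    have A2: "pathmat T' True (c # cs) *\<^sub>v ff True v = pathmat T' False cs *\<^sub>v ff False (?Ar *\<^sub>v v)"
      unfolding ff_def if_True if_False using e2 e3 by simp
    show ?thesis unfolding iT endeq e1 A2 using IH by blast
  qed
qed

lemma modT': "is_module T'"
proof -
  obtain N0 where N0: "\<forall>i cs. length cs \<ge> N0 \<longrightarrow>
        pathmat T i cs = 0\<^sub>m (dimv T (if even (length cs) then i else \<not> i)) (dimv T i)"
    using modT unfolding is_module_def by blast
  have "pathmat T' i cs = 0\<^sub>m (dimv T' (if even (length cs) then i else \<not> i)) (dimv T' i)"
    if len: "length cs \<ge> N0" for i cs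
  proof -
    have z: "pathmat T i cs = 0\<^sub>m n n" using N0 len by (simp add: dimv_def)
    have "pathmat T' i cs = 0\<^sub>m mm mm"
    proof (rule mat_eq_vec[OF pT'_carr])
      fix z :: "complex vec" assume zW: "z \<in> W"
      have gK: "gg i z \<in> KK i" using g0_R0[OF zW] zW by (auto simp: gg_def KK_def)
      have fg: "ff i (gg i z) = z" using f0g0[OF zW] f1g1[OF zW] by (simp add: ff_def gg_def)
      have "pathmat T' i cs *\<^sub>v z = ff (if even (length cs) then i else \<not> i) (pathmat T i cs *\<^sub>v gg i z)"
        using path_inter[OF gK, of cs] fg by simp
      also have "\<dots> = 0\<^sub>v mm" using z KKc[OF gK] f0_zero' f1_zero by (simp add: ff_def)
      finally show "pathmat T' i cs *\<^sub>v z = 0\<^sub>m mm mm *\<^sub>v z" using zW by simp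
    qed simp
    then show ?thesis by (simp add: dimv_def)
  qed
  then have P: "\<forall>i cs. length cs \<ge> N0 \<longrightarrow>
      pathmat T' i cs = 0\<^sub>m (dimv T' (if even (length cs) then i else \<not> i)) (dimv T' i)" by blast
  show ?thesis unfolding is_module_def T'dims using T'carr T'rel1 T'rel2 P by blast
qed

lemma tbs'_one: "tbs T' = 1\<^sub>m mm"
proof (rule mat_eq_vec[of _ mm mm])
  show "tbs T' \<in> carrier_mat mm mm" using T'carr by simp
  show "1\<^sub>m mm \<in> carrier_mat mm mm" by simp
  fix z :: "complex vec" assume z: "z \<in> W"
  have ec: "e1m n *\<^sub>v z \<in> V" using z by simp
  have jc: "J *\<^sub>v (e1m n *\<^sub>v z) \<in> V" using ec by simp
  have "tbs T' *\<^sub>v z = tlm n *\<^sub>v (J *\<^sub>v (e1m n *\<^sub>v z))"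
    using T'v(4)[OF z] NPv[OF ec] QPv[OF jc] by (simp add: f0_def g1_def)
  also have "\<dots> = z"
  proof (rule eq_vecI)
    fix i assume i: "i < dim_vec z"
    then have i': "i < mm" "Suc i < n" "i < n" using z n_mm by auto
    show "(tlm n *\<^sub>v (J *\<^sub>v (e1m n *\<^sub>v z))) $ i = z $ i"
      using tlm_vec'[OF i'(1) jc] shm_vec[OF i'(2) ec] e1m_vec'[OF i'(3) z] i' by (simp del: index_mult_mat_vec)
  qed (use z in simp)
  finally show "tbs T' *\<^sub>v z = 1\<^sub>m mm *\<^sub>v z" using z by simp
qed

lemma ta'_sh: "ta T' = shm mm"
proof (rule mat_eq_vec[of _ mm mm])
  show "ta T' \<in> carrier_mat mm mm" using T'carr by simp
  show "shm mm \<in> carrier_mat mm mm" by simp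
  fix z :: "complex vec" assume z: "z \<in> W"
  have ec: "e0m n *\<^sub>v z \<in> V" using z by simp
  have "ta T' *\<^sub>v z = tkm n *\<^sub>v (e0m n *\<^sub>v z)"
    using T'v(1)[OF z] AiAv[of "P *\<^sub>v (e0m n *\<^sub>v z)"] ec QPv[OF ec] by (simp add: f1_def g0_def)
  also have "\<dots> = shm mm *\<^sub>v z"
  proof (rule eq_vecI)
    fix i assume i: "i < dim_vec (shm mm *\<^sub>v z)"
    then have i': "i < mm" "i < n" using z n_mm by (auto simp: shm_def)
    show "(tkm n *\<^sub>v (e0m n *\<^sub>v z)) $ i = (shm mm *\<^sub>v z) $ i"
      using tkm_vec'[OF i'(1) ec] shm_vec[OF i'(1) z] e0m_vec'[OF i'(2) z] i' by (simp del: index_mult_mat_vec)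
  qed (simp add: tkm_def shm_def mm_def)
  finally show "ta T' *\<^sub>v z = shm mm *\<^sub>v z" .
qed

lemma T'_Ir: "T' \<in> I_r (n - 1)"
proof (cases "mm = 0")
  case True
  then have "n - 1 = 0" by (simp add: mm_def)
  then show ?thesis unfolding I_r_def using modT' True by simp
next
  case False
  have inv: "invertible_mat (1\<^sub>m mm :: complex mat)"
    unfolding invertible_mat_def inverts_mat_def by (auto intro!: exI[of _ "1\<^sub>m mm"])
  have "ta T' * tbs T' = shm mm" unfolding tbs'_one ta'_sh by (rule right_mult_one_mat') (simp add: shm_def)
  moreover have "n - 1 = mm" "n - 1 \<noteq> 0" using False by (auto simp: mm_def)
  ultimately show ?thesis unfolding I_r_def using modT' False inv nilp_shm[of mm] tbs'_one
    by simp
qed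

lemma main_loc:
  "subquot_iso T (soc0 T) (soc1 T) {0\<^sub>v (dim0 T)} {0\<^sub>v (dim1 T)} S1
    \<and> subquot_iso T (carrier_vec (dim0 T)) (carrier_vec (dim1 T)) (rad0 T) (rad1 T) S0
    \<and> (\<exists>T'. T' \<in> I_r (n - 1) \<and> subquot_iso T (rad0 T) (rad1 T) (soc0 T) (soc1 T) T')"
  using iso_S1 iso_S0 T'_Ir iso_T' unfolding rad0_eq rad1_eq soc0_eq soc1_eq by blast

end


lemma vec_id: "v \<in> carrier_vec n \<Longrightarrow> vec n (\<lambda>i. v $ i) = v"
  by (intro eq_vecI) auto

lemma exists_P:
  fixes N :: "complex mat"
  assumes N: "N \<in> carrier_mat n n" and n1: "1 \<le> n" and nil: "N ^\<^sub>m n = 0\<^sub>m n n"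
    and nz: "N ^\<^sub>m (n - 1) \<noteq> 0\<^sub>m n n"
  shows "\<exists>P Q. P \<in> carrier_mat n n \<and> Q \<in> carrier_mat n n \<and> P * Q = 1\<^sub>m n \<and> Q * P = 1\<^sub>m n
    \<and> N * P = P * shm n"
proof -
  let ?Nf = "\<lambda>x. N *\<^sub>v x"
  obtain u where u: "u \<in> carrier_vec n" "N ^\<^sub>m (n - 1) *\<^sub>v u \<noteq> 0\<^sub>v n"
  proof -
    have "\<exists>u \<in> carrier_vec n. N ^\<^sub>m (n - 1) *\<^sub>v u \<noteq> 0\<^sub>v n"
    proof (rule ccontr)
      assume "\<not> ?thesis"
      then have "N ^\<^sub>m (n - 1) = 0\<^sub>m n n" using N by (intro mat_eq_vec[of _ n n]) auto
      then show False using nz by simp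
    qed
    then show ?thesis using that by blast
  qed
  have itc: "(?Nf ^^ k) x \<in> carrier_vec n" if "x \<in> carrier_vec n" for k x using funpow_carrier[OF N that] .
  define P where "P = mat n n (\<lambda>(i,j). ((?Nf ^^ j) u) $ i)"
  have Pc: "P \<in> carrier_mat n n" unfolding P_def by simp
  have colP: "j < n \<Longrightarrow> col P j = (?Nf ^^ j) u" for j
    unfolding P_def using vec_id[OF itc[OF u(1), of j]] by simp
  have Jc: "shm n \<in> carrier_mat n n" by simp
  have NP: "N * P = P * shm n"
  proof (rule mat_col_eqI)
    fix j assume "j < dim_col (P * shm n)"
    then have j: "j < n" using Pc by (simp add: shm_def)
    have l: "col (N * P) j = (?Nf ^^ Suc j) u" using col_mult2[OF N Pc j] colP[OF j] by simp
    have colJ: "col (shm n) j = (if Suc j < n then unit_vec n (Suc j) else 0\<^sub>v n)"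
      unfolding shm_def using j by (intro eq_vecI) (auto simp: unit_vec_def)
    have r: "col (P * shm n) j = P *\<^sub>v col (shm n) j" using col_mult2[OF Pc Jc j] .
    show "col (N * P) j = col (P * shm n) j"
    proof (cases "Suc j < n")
      case True
      then show ?thesis using l r colJ mat_mult_unit[OF Pc True] colP[OF True] by simp
    next
      case False
      then have "Suc j = n" using j by simp
      then have "(?Nf ^^ Suc j) u = 0\<^sub>v n" using pow_funpow[OF N u(1), of n] nil u(1) by simp
      then show ?thesis using l r colJ False Pc by simp
    qed
  qed (use Pc N in \<open>auto simp: shm_def\<close>)
  have NPv: "x \<in> carrier_vec n \<Longrightarrow> N *\<^sub>v (P *\<^sub>v x) = P *\<^sub>v (shm n *\<^sub>v x)" for x
  proof -
    assume x: "x \<in> carrier_vec n"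
    have "N *\<^sub>v (P *\<^sub>v x) = (N * P) *\<^sub>v x" using N Pc x by (simp add: assoc_mult_mat_vec[of _ n n _ n])
    also have "\<dots> = (P * shm n) *\<^sub>v x" using NP by simp
    also have "\<dots> = P *\<^sub>v (shm n *\<^sub>v x)" using Pc x by (simp add: assoc_mult_mat_vec[of _ n n _ n])
    finally show ?thesis .
  qed
  have iter: "x \<in> carrier_vec n \<Longrightarrow> (?Nf ^^ k) (P *\<^sub>v x) = P *\<^sub>v (((\<lambda>x. shm n *\<^sub>v x) ^^ k) x)" for k x
  proof (induction k)
    case 0 then show ?case by simp
  next
    case (Suc k)
    have c: "((\<lambda>x. shm n *\<^sub>v x) ^^ k) x \<in> carrier_vec n" using funpow_carrier[OF Jc Suc.prems] .
    show ?case using Suc NPv[OF c] by simp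
  qed
  have inj: "y = 0\<^sub>v n" if y: "y \<in> carrier_vec n" "P *\<^sub>v y = 0\<^sub>v n" for y
  proof (rule ccontr)
    assume ny: "y \<noteq> 0\<^sub>v n"
    then have ex: "\<exists>i. i < n \<and> y $ i \<noteq> 0" using y(1) by (auto simp: vec_eq_iff)
    define i where "i = (LEAST i. i < n \<and> y $ i \<noteq> 0)"
    have i: "i < n" "y $ i \<noteq> 0" using LeastI_ex[OF ex] unfolding i_def by auto
    have below: "l < i \<Longrightarrow> y $ l = 0" for l
      using not_less_Least[of l "\<lambda>i. i < n \<and> y $ i \<noteq> 0"] i(1) unfolding i_def by auto
    define k where "k = n - 1 - i"
    have z0: "(?Nf ^^ k) (0\<^sub>v n) = 0\<^sub>v n" for k by (induction k) (use N in auto)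
    have "(?Nf ^^ k) (P *\<^sub>v y) = 0\<^sub>v n" using y(2) z0 by simp
    moreover have "((\<lambda>x. shm n *\<^sub>v x) ^^ k) y = y $ i \<cdot>\<^sub>v unit_vec n (n - 1)"
    proof (rule eq_vecI)
      fix j assume j: "j < dim_vec (y $ i \<cdot>\<^sub>v unit_vec n (n - 1))"
      then have jn: "j < n" by simp
      show "((\<lambda>x. shm n *\<^sub>v x) ^^ k) y $ j = (y $ i \<cdot>\<^sub>v unit_vec n (n - 1)) $ j"
      proof (cases "j = n - 1")
        case True
        then show ?thesis using shm_funpow[OF y(1) jn, of k] jn i unfolding k_def by auto
      next
        case False
        then show ?thesis using shm_funpow[OF y(1) jn, of k] jn i below[of "j - k"] unfolding k_def by auto
      qed
    next
      show "dim_vec (((\<lambda>x. shm n *\<^sub>v x) ^^ k) y) = dim_vec (y $ i \<cdot>\<^sub>v unit_vec n (n - 1))"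
        using funpow_carrier[OF Jc y(1), of k] by simp
    qed
    moreover have "P *\<^sub>v (y $ i \<cdot>\<^sub>v unit_vec n (n - 1)) = y $ i \<cdot>\<^sub>v (N ^\<^sub>m (n - 1) *\<^sub>v u)"
    proof -
      have "P *\<^sub>v (y $ i \<cdot>\<^sub>v unit_vec n (n - 1)) = y $ i \<cdot>\<^sub>v (P *\<^sub>v unit_vec n (n - 1))"
        using mat_smult_vec[OF Pc unit_vec_carrier] .
      also have "P *\<^sub>v unit_vec n (n - 1) = (?Nf ^^ (n - 1)) u" using mat_mult_unit[OF Pc] colP n1 by simp
      also have "\<dots> = N ^\<^sub>m (n - 1) *\<^sub>v u" using pow_funpow[OF N u(1)] by simp
      finally show ?thesis .
    qed
    ultimately have "y $ i \<cdot>\<^sub>v (N ^\<^sub>m (n - 1) *\<^sub>v u) = 0\<^sub>v n" using iter[OF y(1), of k] by simp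
    then have "N ^\<^sub>m (n - 1) *\<^sub>v u = 0\<^sub>v n" using i(2) N u(1)
      by (auto simp: vec_eq_iff)
    then show False using u(2) by simp
  qed
  have "det P \<noteq> 0" using det_0_iff_vec_prod_zero_field[OF Pc] inj by auto
  from det_non_zero_imp_unit[OF Pc this, of "()"]
  obtain Q where Q: "Q \<in> carrier_mat n n" "Q * P = 1\<^sub>m n" "P * Q = 1\<^sub>m n"
    unfolding Units_def ring_mat_def by auto
  show ?thesis using Pc Q NP by blast
qed


theorem mainTheorem12:
  fixes n :: nat and T :: rep
  assumes "n \<ge> 1" and "T \<in> I_l n"
  shows "subquot_iso T (soc0 T) (soc1 T) {0\<^sub>v (dim0 T)} {0\<^sub>v (dim1 T)} S1
    \<and> subquot_iso T (carrier_vec (dim0 T)) (carrier_vec (dim1 T)) (rad0 T) (rad1 T) S0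
    \<and> (\<exists>T'. T' \<in> I_r (n - 1) \<and> subquot_iso T (rad0 T) (rad1 T) (soc0 T) (soc1 T) T')"
proof -
  have modT: "is_module T" and d: "dim0 T = n" "dim1 T = n" and inv: "invertible_mat (ta T)"
    and nl: "nilp_order (tbs T * ta T) n n"
    using assms(2) unfolding I_l_def by auto
  have Ac: "ta T \<in> carrier_mat n n" and Yc: "tbs T \<in> carrier_mat n n"
    using is_module_carriers[OF modT] d by auto
  obtain Ai where Ai: "ta T * Ai = 1\<^sub>m n" "Ai * ta T = 1\<^sub>m (dim_row Ai)"
    using inv Ac unfolding invertible_mat_def inverts_mat_def by auto
  have Aic: "Ai \<in> carrier_mat n n"
  proof -
    have "dim_col Ai = n" using arg_cong[OF Ai(1), of dim_col] by simp
    moreover have "dim_row Ai = n" using arg_cong[OF Ai(2), of dim_col] Ac by simp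
    ultimately show ?thesis by auto
  qed
  have Nc: "tbs T * ta T \<in> carrier_mat n n" using Ac Yc by auto
  obtain P Q where PQ: "P \<in> carrier_mat n n" "Q \<in> carrier_mat n n" "P * Q = 1\<^sub>m n" "Q * P = 1\<^sub>m n"
    "(tbs T * ta T) * P = P * shm n"
    using exists_P[OF Nc assms(1)] nl unfolding nilp_order_def by blast
  interpret L T n Ai P Q
    by (unfold_locales) (use assms(1) modT d Aic Ai PQ nl in \<open>auto simp: nilp_order_def\<close>)
  show ?thesis by (rule main_loc)
qed

end
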